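(* Let $K\subseteq\mathbb{R}^d$ be a compact connected set. Then there is a constant $C>0$ such that $\frac{|f(y)-f(x)|}{|y-x|}\le C\|f\|_{C^1(K)}$ for all $f\in C^1(K)$ and all $x\neq y$ in $K$ if and only if $K$ is Whitney regular.
   Context: $C^1(K)$ is the set of $f:K\to\mathbb{R}$ admitting a continuous $df:K\to\mathbb{R}^d$ with $\lim_{y\to x,\,y\in K\setminus\{x\}}\frac{f(y)-f(x)-\langle df(x),y-x\rangle}{|y-x|}=0$ for all $x\in K$, normed by $\|f\|_{C^1(K)}=\|f\|_K+\inf\{\|df\|_K: df \text{ a continuous derivative of } f\}$. $K$ is Whitney regular if there is $C>0$ such that any two points $x,y\in K$ can be joined by a rectifiable path in $K$ of length at most $C|x-y|$ (a rectifiable path is a continuous map $\gamma:[a,b]\to K$ of finite length $\sup\sum_j|\gamma(t_j)-\gamma(t_{j-1})|$). *)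

theory Defs
  imports "HOL-Analysis.Analysis"
begin

text \<open>R^d is modelled by an arbitrary Euclidean space 'a.\<close>

definition is_C1_deriv :: "'a::euclidean_space set \<Rightarrow> ('a \<Rightarrow> real) \<Rightarrow> ('a \<Rightarrow> 'a) \<Rightarrow> bool" where
  "is_C1_deriv K f df \<longleftrightarrow> continuous_on K df \<and>
     (\<forall>x\<in>K. ((\<lambda>y. (f y - f x - inner (df x) (y - x)) / norm (y - x)) \<longlongrightarrow> 0) (at x within K))"

definition C1 :: "'a::euclidean_space set \<Rightarrow> ('a \<Rightarrow> real) set" where
  "C1 K = {f. \<exists>df. is_C1_deriv K f df}"

definition sup_norm_on :: "'a set \<Rightarrow> ('a \<Rightarrow> 'b::real_normed_vector) \<Rightarrow> real" where
  "sup_norm_on K g = (SUP x\<in>K. norm (g x))"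

definition C1_norm :: "'a::euclidean_space set \<Rightarrow> ('a \<Rightarrow> real) \<Rightarrow> real" where
  "C1_norm K f = sup_norm_on K f + Inf {sup_norm_on K df | df. is_C1_deriv K f df}"

definition polygon_lengths :: "real \<Rightarrow> real \<Rightarrow> (real \<Rightarrow> 'a::real_normed_vector) \<Rightarrow> real set" where
  "polygon_lengths a b \<gamma> = {\<Sum>j<n. norm (\<gamma> (t (Suc j)) - \<gamma> (t j)) | t n.
       t 0 = a \<and> t n = b \<and> (\<forall>j<n. t j \<le> t (Suc j))}"

definition path_length_on :: "real \<Rightarrow> real \<Rightarrow> (real \<Rightarrow> 'a::real_normed_vector) \<Rightarrow> real" where
  "path_length_on a b \<gamma> = Sup (polygon_lengths a b \<gamma>)"

definition rectifiable_path_in :: "'a::real_normed_vector set \<Rightarrow> real \<Rightarrow> real \<Rightarrow> (real \<Rightarrow> 'a) \<Rightarrow> bool" where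
  "rectifiable_path_in K a b \<gamma> \<longleftrightarrow> a \<le> b \<and> continuous_on {a..b} \<gamma> \<and> \<gamma> ` {a..b} \<subseteq> K \<and>
     bdd_above (polygon_lengths a b \<gamma>)"

definition whitney_regular :: "'a::euclidean_space set \<Rightarrow> bool" where
  "whitney_regular K \<longleftrightarrow> (\<exists>C>0. \<forall>x\<in>K. \<forall>y\<in>K. \<exists>a b \<gamma>.
     rectifiable_path_in K a b \<gamma> \<and> \<gamma> a = x \<and> \<gamma> b = y \<and> path_length_on a b \<gamma> \<le> C * norm (x - y))"

end

theory Submission
  imports Defs
begin

lemma C1_continuous:
  assumes "is_C1_deriv K f df"
  shows "continuous_on K f"
proof -
  { fix x assume x: "x \<in> K"
    let ?Q = "\<lambda>y. (f y - f x - inner (df x) (y - x)) / norm (y - x)"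
    have Q: "(?Q \<longlongrightarrow> 0) (at x within K)" using assms x unfolding is_C1_deriv_def by blast
    have n: "((\<lambda>y. norm (y - x)) \<longlongrightarrow> 0) (at x within K)"
      by (intro tendsto_eq_intros) auto
    have i: "((\<lambda>y. inner (df x) (y - x)) \<longlongrightarrow> 0) (at x within K)"
      by (intro tendsto_eq_intros) auto
    have "((\<lambda>y. norm (y - x) * ?Q y + inner (df x) (y - x)) \<longlongrightarrow> 0 * 0 + 0) (at x within K)"
      by (intro tendsto_add tendsto_mult n Q i)
    moreover have "eventually (\<lambda>y. norm (y - x) * ?Q y + inner (df x) (y - x) = f y - f x) (at x within K)"
      unfolding eventually_at_filter by (auto intro!: always_eventually)
    ultimately have "((\<lambda>y. f y - f x) \<longlongrightarrow> 0) (at x within K)"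
      using tendsto_cong by fastforce
    hence "(f \<longlongrightarrow> f x) (at x within K)" using Lim_null by blast
  }
  thus ?thesis unfolding continuous_on_def by blast
qed

lemma C1_local:
  assumes "is_C1_deriv K f df" "p \<in> K" "e > 0"
  shows "\<exists>d>0. \<forall>y\<in>K. norm (y - p) < d \<longrightarrow> \<bar>f y - f p\<bar> \<le> (norm (df p) + e) * norm (y - p)"
proof -
  have "((\<lambda>y. (f y - f p - inner (df p) (y - p)) / norm (y - p)) \<longlongrightarrow> 0) (at p within K)"
    using assms unfolding is_C1_deriv_def by blast
  then obtain d where d: "d > 0" and dd: "\<And>y. y \<in> K \<Longrightarrow> 0 < dist y p \<Longrightarrow> dist y p < d \<Longrightarrow>
      \<bar>(f y - f p - inner (df p) (y - p)) / norm (y - p)\<bar> < e"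
    using assms(3) unfolding Lim_within by (auto simp: dist_real_def)
  have "\<bar>f y - f p\<bar> \<le> (norm (df p) + e) * norm (y - p)" if y: "y \<in> K" "norm (y - p) < d" for y
  proof (cases "y = p")
    case True then show ?thesis by simp
  next
    case False
    hence np: "norm (y - p) > 0" by simp
    have "\<bar>(f y - f p - inner (df p) (y - p)) / norm (y - p)\<bar> < e"
      using dd[OF y(1)] y False by (simp add: dist_norm)
    hence a: "\<bar>f y - f p - inner (df p) (y - p)\<bar> \<le> e * norm (y - p)"
      using np by (simp add: abs_divide divide_less_eq less_imp_le)
    have b: "\<bar>inner (df p) (y - p)\<bar> \<le> norm (df p) * norm (y - p)"
      by (rule Cauchy_Schwarz_ineq2)
    show ?thesis using a b by (simp add: algebra_simps)
  qed
  thus ?thesis using d by blast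
qed

lemma pl_single: "a \<le> s \<Longrightarrow> norm (\<gamma> s - \<gamma> a) \<in> polygon_lengths a s \<gamma>"
  unfolding polygon_lengths_def
  by (rule CollectI, rule exI[of _ "\<lambda>j. if j = 0 then a else s"], rule exI[of _ 1]) auto

lemma pl_zero: "0 \<in> polygon_lengths a a \<gamma>"
  using pl_single[of a a \<gamma>] by simp

lemma pl_nonneg: "p \<in> polygon_lengths a s \<gamma> \<Longrightarrow> 0 \<le> p"
  unfolding polygon_lengths_def by (auto intro: sum_nonneg)

lemma pl_extend:
  assumes "p \<in> polygon_lengths a s \<gamma>" "s \<le> s'"
  shows "p + norm (\<gamma> s' - \<gamma> s) \<in> polygon_lengths a s' \<gamma>"
proof -
  obtain t n where t: "p = (\<Sum>j<n. norm (\<gamma> (t (Suc j)) - \<gamma> (t j)))" "t 0 = a" "t n = s"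
    "\<forall>j<n. t j \<le> t (Suc j)"
    using assms(1) unfolding polygon_lengths_def by blast
  define t' where "t' = t(Suc n := s')"
  have e: "(\<Sum>j<n. norm (\<gamma> (t' (Suc j)) - \<gamma> (t' j))) = p"
    unfolding t(1) by (rule sum.cong) (auto simp: t'_def)
  have "(\<Sum>j<Suc n. norm (\<gamma> (t' (Suc j)) - \<gamma> (t' j))) = p + norm (\<gamma> s' - \<gamma> s)"
    using e t by (simp add: t'_def)
  moreover have "t' 0 = a" "t' (Suc n) = s'" "\<forall>j<Suc n. t' j \<le> t' (Suc j)"
    using t assms(2) by (auto simp: t'_def less_Suc_eq)
  ultimately show ?thesis unfolding polygon_lengths_def
    by (intro CollectI exI[of _ t'] exI[of _ "Suc n"]) auto
qed

lemma pl_bdd: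
  assumes "bdd_above (polygon_lengths a b \<gamma>)" "s \<le> b"
  shows "bdd_above (polygon_lengths a s \<gamma>)"
proof -
  obtain B where B: "\<And>q. q \<in> polygon_lengths a b \<gamma> \<Longrightarrow> q \<le> B" using assms(1) by (auto simp: bdd_above_def)
  have "p \<le> B" if "p \<in> polygon_lengths a s \<gamma>" for p
    using B[OF pl_extend[OF that assms(2)]] by (smt (verit) norm_ge_zero)
  thus ?thesis by (auto simp: bdd_above_def)
qed

lemma pl_mono:
  assumes "bdd_above (polygon_lengths a b \<gamma>)" "a \<le> s" "s \<le> s'" "s' \<le> b"
  shows "path_length_on a s \<gamma> + norm (\<gamma> s' - \<gamma> s) \<le> path_length_on a s' \<gamma>"
proof -
  have bs': "bdd_above (polygon_lengths a s' \<gamma>)" using pl_bdd[OF assms(1) assms(4)] .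
  have ne: "polygon_lengths a s \<gamma> \<noteq> {}" using pl_single[OF assms(2)] by blast
  have "p \<le> path_length_on a s' \<gamma> - norm (\<gamma> s' - \<gamma> s)" if "p \<in> polygon_lengths a s \<gamma>" for p
    using cSup_upper[OF pl_extend[OF that assms(3)] bs'] unfolding path_length_on_def by simp
  hence "Sup (polygon_lengths a s \<gamma>) \<le> path_length_on a s' \<gamma> - norm (\<gamma> s' - \<gamma> s)"
    using ne by (intro cSup_least) auto
  thus ?thesis unfolding path_length_on_def by simp
qed

lemma pl_len_nonneg:
  assumes "bdd_above (polygon_lengths a b \<gamma>)" "a \<le> s" "s \<le> b"
  shows "0 \<le> path_length_on a s \<gamma>"
proof -
  have "0 \<le> norm (\<gamma> s - \<gamma> a)" by simp
  also have "\<dots> \<le> path_length_on a s \<gamma>" unfolding path_length_on_def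
    using cSup_upper[OF pl_single[OF assms(2)] pl_bdd[OF assms(1,3)]] .
  finally show ?thesis .
qed

lemma path_bound_e:
  assumes C1: "is_C1_deriv K f df" and ab: "a \<le> b" and cont: "continuous_on {a..b} \<gamma>"
    and img: "\<gamma> ` {a..b} \<subseteq> K" and bdd: "bdd_above (polygon_lengths a b \<gamma>)"
    and M: "\<forall>z\<in>K. norm (df z) \<le> M" and e: "e > 0"
  shows "\<bar>f (\<gamma> b) - f (\<gamma> a)\<bar> \<le> (M + e) * path_length_on a b \<gamma>"
proof (rule ccontr)
  let ?l = "\<lambda>s. path_length_on a s \<gamma>"
  let ?G = "\<lambda>s. \<bar>f (\<gamma> s) - f (\<gamma> a)\<bar>"
  define S where "S = {s\<in>{a..b}. (M + e) * ?l s < ?G s}"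
  assume "\<not> ?thesis"
  hence bS: "b \<in> S" using ab unfolding S_def by auto
  have Mpos: "0 \<le> M"
  proof -
    have "\<gamma> a \<in> K" using img ab by auto
    thus ?thesis using M norm_ge_zero order_trans by blast
  qed
  have fc: "continuous_on K f" using C1_continuous[OF C1] .
  have Gc: "continuous_on {a..b} ?G"
    by (intro continuous_intros continuous_on_compose2[OF fc cont img]) 
  have bddS: "bdd_below S" unfolding S_def by (auto simp: bdd_below_def)
  define s0 where "s0 = Inf S"
  have s0le: "s0 \<le> u" if "u \<in> S" for u using cInf_lower[OF that bddS] s0_def by simp
  have as0: "a \<le> s0" unfolding s0_def using bS by (intro cInf_greatest) (auto simp: S_def)
  have s0b: "s0 \<le> b" using s0le[OF bS] .
  have lnn: "0 \<le> ?l s" if "a \<le> s" "s \<le> b" for s using pl_len_nonneg[OF bdd that] .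
  have s0S: "s0 \<notin> S"
  proof
    assume s0S: "s0 \<in> S"
    have "s0 \<noteq> a" using s0S lnn[of a] Mpos e ab unfolding S_def by (auto simp: not_less) (smt (verit) mult_nonneg_nonneg)
    hence as0': "a < s0" using as0 by simp
    define c where "c = ?G s0 - (M + e) * ?l s0"
    have c: "c > 0" using s0S unfolding S_def c_def by auto
    obtain d where d: "d > 0" "\<And>u. u \<in> {a..b} \<Longrightarrow> dist u s0 < d \<Longrightarrow> dist (?G u) (?G s0) < c"
    proof -
      have "s0 \<in> {a..b}" using as0 s0b by auto
      from Gc[unfolded continuous_on_iff, rule_format, OF this c] show ?thesis using that by blast
    qed
    define u where "u = max a (s0 - d/2)"
    have u: "a \<le> u" "u < s0" "u \<le> b" using as0' d(1) s0b by (auto simp: u_def)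
    have "dist u s0 < d" using u d(1) by (auto simp: u_def dist_real_def)
    hence "?G u > ?G s0 - c" using d(2)[of u] u by (auto simp: dist_real_def)
    hence "?G u > (M + e) * ?l s0" by (simp add: c_def)
    moreover have "?l u \<le> ?l s0" using pl_mono[OF bdd u(1) _ s0b] u by (smt (verit) norm_ge_zero)
    ultimately have "?G u > (M + e) * ?l u"
      using mult_left_mono[of "?l u" "?l s0" "M + e"] Mpos e by linarith
    hence "u \<in> S" using u unfolding S_def by auto
    thus False using s0le u(2) by fastforce
  qed
  have s0b': "s0 < b" using s0S bS s0b by (metis order_less_le)
  have g0: "?G s0 \<le> (M + e) * ?l s0" using s0S as0 s0b unfolding S_def by auto
  have ps0: "\<gamma> s0 \<in> K" using img as0 s0b by auto
  obtain d where d: "d > 0" "\<forall>y\<in>K. norm (y - \<gamma> s0) < d \<longrightarrow>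
      \<bar>f y - f (\<gamma> s0)\<bar> \<le> (norm (df (\<gamma> s0)) + e) * norm (y - \<gamma> s0)"
    using C1_local[OF C1 ps0 e] by blast
  obtain dl where dl: "dl > 0" "\<And>u. u \<in> {a..b} \<Longrightarrow> dist u s0 < dl \<Longrightarrow> dist (\<gamma> u) (\<gamma> s0) < d"
  proof -
      have "s0 \<in> {a..b}" using as0 s0b by auto
      from cont[unfolded continuous_on_iff, rule_format, OF this d(1)] show ?thesis using that by blast
    qed
  have notS: "u \<notin> S" if u: "s0 \<le> u" "u < s0 + dl" for u
  proof
    assume uS: "u \<in> S"
    hence ua: "u \<in> {a..b}" unfolding S_def by auto
    have "dist (\<gamma> u) (\<gamma> s0) < d" using dl(2)[OF ua] u by (auto simp: dist_real_def)
    hence "\<bar>f (\<gamma> u) - f (\<gamma> s0)\<bar> \<le> (norm (df (\<gamma> s0)) + e) * norm (\<gamma> u - \<gamma> s0)"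
      using d(2) img ua by (simp add: dist_norm image_subset_iff)
    also have "\<dots> \<le> (M + e) * norm (\<gamma> u - \<gamma> s0)"
      using M ps0 by (intro mult_right_mono) auto
    finally have h1: "\<bar>f (\<gamma> u) - f (\<gamma> s0)\<bar> \<le> (M + e) * norm (\<gamma> u - \<gamma> s0)" .
    have h2: "?l s0 + norm (\<gamma> u - \<gamma> s0) \<le> ?l u" using pl_mono[OF bdd as0 u(1)] ua by auto
    have "?G u \<le> ?G s0 + \<bar>f (\<gamma> u) - f (\<gamma> s0)\<bar>" by linarith
    also have "\<dots> \<le> (M + e) * (?l s0 + norm (\<gamma> u - \<gamma> s0))"
      using g0 h1 by (simp add: distrib_left)
    also have "\<dots> \<le> (M + e) * ?l u" using h2 Mpos e by (intro mult_left_mono) auto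
    finally show False using uS unfolding S_def by auto
  qed
  have "s0 + dl \<le> Inf S"
  proof (rule cInf_greatest)
    show "S \<noteq> {}" using bS by blast
    fix u assume "u \<in> S" thus "s0 + dl \<le> u" using notS[of u] s0le[of u] by linarith
  qed
  thus False using dl(1) s0_def by simp
qed

lemma path_bound:
  assumes C1: "is_C1_deriv K f df" and ab: "a \<le> b" and cont: "continuous_on {a..b} \<gamma>"
    and img: "\<gamma> ` {a..b} \<subseteq> K" and bdd: "bdd_above (polygon_lengths a b \<gamma>)"
    and M: "\<forall>z\<in>K. norm (df z) \<le> M"
  shows "\<bar>f (\<gamma> b) - f (\<gamma> a)\<bar> \<le> M * path_length_on a b \<gamma>"
proof -
  have L: "0 \<le> path_length_on a b \<gamma>" using pl_len_nonneg[OF bdd ab order_refl] .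
  have "\<bar>f (\<gamma> b) - f (\<gamma> a)\<bar> \<le> M * path_length_on a b \<gamma> + e" if e: "e > 0" for e
  proof -
    define e' where "e' = e / (path_length_on a b \<gamma> + 1)"
    have e': "e' > 0" using e L by (simp add: e'_def)
    have "\<bar>f (\<gamma> b) - f (\<gamma> a)\<bar> \<le> (M + e') * path_length_on a b \<gamma>"
      using path_bound_e[OF assms e'] .
    also have "\<dots> = M * path_length_on a b \<gamma> + e' * path_length_on a b \<gamma>" by (simp add: algebra_simps)
    also have "e' * path_length_on a b \<gamma> \<le> e" unfolding e'_def using e L
      by (simp add: field_simps)
    finally show ?thesis by simp
  qed
  thus ?thesis by (meson field_le_epsilon)
qed

lemma sup_norm_upper:
  assumes "compact K" "continuous_on K g" "z \<in> K"
  shows "norm (g z) \<le> sup_norm_on K g"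
proof -
  have "compact ((\<lambda>z. norm (g z)) ` K)"
    by (intro compact_continuous_image continuous_intros assms)
  hence "bdd_above ((\<lambda>z. norm (g z)) ` K)" by (intro bounded_imp_bdd_above compact_imp_bounded)
  thus ?thesis unfolding sup_norm_on_def using assms(3) by (rule cSUP_upper2) simp
qed

lemma dirA:
  fixes K :: "'a::euclidean_space set"
  assumes "compact K" "whitney_regular K"
  shows "\<exists>C>0. \<forall>f\<in>C1 K. \<forall>x\<in>K. \<forall>y\<in>K. x \<noteq> y \<longrightarrow>
            \<bar>f y - f x\<bar> / norm (y - x) \<le> C * C1_norm K f"
proof -
  obtain C where C: "C > 0" "\<forall>x\<in>K. \<forall>y\<in>K. \<exists>a b \<gamma>.
     rectifiable_path_in K a b \<gamma> \<and> \<gamma> a = x \<and> \<gamma> b = y \<and> path_length_on a b \<gamma> \<le> C * norm (x - y)"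
    using assms(2) unfolding whitney_regular_def by blast
  have "\<bar>f y - f x\<bar> / norm (y - x) \<le> C * C1_norm K f"
    if f: "f \<in> C1 K" and x: "x \<in> K" and y: "y \<in> K" and xy: "x \<noteq> y" for f x y
  proof -
    obtain a b \<gamma> where g: "rectifiable_path_in K a b \<gamma>" "\<gamma> a = x" "\<gamma> b = y"
      "path_length_on a b \<gamma> \<le> C * norm (x - y)"
      using C(2) x y by blast
    let ?L = "path_length_on a b \<gamma>"
    have ab: "a \<le> b" and cont: "continuous_on {a..b} \<gamma>" and img: "\<gamma> ` {a..b} \<subseteq> K"
      and bdd: "bdd_above (polygon_lengths a b \<gamma>)" using g(1) unfolding rectifiable_path_in_def by auto
    have Lge: "norm (y - x) \<le> ?L" unfolding path_length_on_def
      using cSup_upper[OF pl_single[OF ab] bdd] g by simp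
    have Lpos: "?L > 0" using Lge xy by (smt (verit) zero_less_norm_iff right_minus_eq)
    define D where "D = {sup_norm_on K df | df. is_C1_deriv K f df}"
    have Dne: "D \<noteq> {}" using f unfolding D_def C1_def by auto
    have Dlow: "\<bar>f y - f x\<bar> / ?L \<le> m" if mD: "m \<in> D" for m
    proof -
      obtain df where df: "is_C1_deriv K f df" "m = sup_norm_on K df" using mD unfolding D_def by auto
      have "\<forall>z\<in>K. norm (df z) \<le> m"
        using sup_norm_upper[OF assms(1)] df unfolding is_C1_deriv_def by blast
      from path_bound[OF df(1) ab cont img bdd this] g(2,3)
      have "\<bar>f y - f x\<bar> \<le> m * ?L" by simp
      thus ?thesis using Lpos by (simp add: divide_le_eq)
    qed
    have I: "\<bar>f y - f x\<bar> / ?L \<le> Inf D" using Dne Dlow by (intro cInf_greatest) auto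
    have I0: "0 \<le> Inf D" using I Lpos by (smt (verit) divide_nonneg_pos abs_ge_zero)
    have "\<bar>f y - f x\<bar> \<le> Inf D * ?L" using I Lpos by (simp add: divide_le_eq mult.commute)
    also have "\<dots> \<le> Inf D * (C * norm (y - x))" using g(4) I0 by (intro mult_left_mono) (auto simp: norm_minus_commute)
    finally have "\<bar>f y - f x\<bar> / norm (y - x) \<le> C * Inf D" using xy by (simp add: divide_le_eq mult_ac)
    moreover have "0 \<le> sup_norm_on K f"
      using sup_norm_upper[OF assms(1) C1_continuous x, of f] f unfolding C1_def
      by (smt (verit) mem_Collect_eq norm_ge_zero)
    ultimately show ?thesis unfolding C1_norm_def D_def[symmetric] using C(1)
      by (smt (verit) mult_left_mono)
  qed
  thus ?thesis using C(1) by blast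
qed

definition chainle :: "'a::real_normed_vector set \<Rightarrow> real \<Rightarrow> 'a \<Rightarrow> 'a \<Rightarrow> real \<Rightarrow> bool" where
  "chainle K e x y M \<longleftrightarrow> (\<exists>z n. z 0 = x \<and> z n = y \<and> (\<forall>i\<le>n. z i \<in> K) \<and>
     (\<forall>i<n. norm (z (Suc i) - z i) \<le> e) \<and> (\<Sum>i<n. norm (z (Suc i) - z i)) \<le> M)"

lemma sum_split_add: "(\<Sum>i<n1+n2. g i) = (\<Sum>i<n1. g i) + (\<Sum>i<n2. g (n1 + i :: nat))"
  by (induction n2) (auto simp: add.assoc)

lemma chain_refl: "x \<in> K \<Longrightarrow> 0 \<le> M \<Longrightarrow> chainle K e x x M"
  unfolding chainle_def by (intro exI[of _ "\<lambda>i. x"] exI[of _ 0]) auto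

lemma chain_step: "x \<in> K \<Longrightarrow> y \<in> K \<Longrightarrow> norm (y - x) \<le> e \<Longrightarrow> norm (y - x) \<le> M \<Longrightarrow> chainle K e x y M"
  unfolding chainle_def by (intro exI[of _ "\<lambda>i. if i = 0 then x else y"] exI[of _ 1]) auto

lemma chain_mono: "chainle K e x y M \<Longrightarrow> e \<le> e' \<Longrightarrow> M \<le> M' \<Longrightarrow> chainle K e' x y M'"
  unfolding chainle_def apply (elim exE conjE)
  subgoal for z n by (intro exI[of _ z] exI[of _ n]) (auto intro: order_trans)
  done

lemma chain_mem: "chainle K e x y M \<Longrightarrow> x \<in> K \<and> y \<in> K"
  unfolding chainle_def by force

lemma telescope_norm:
  fixes z :: "nat \<Rightarrow> 'a::real_normed_vector"
  shows "norm (z n - z 0) \<le> (\<Sum>i<n. norm (z (Suc i) - z i))"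
proof (induction n)
  case (Suc n)
  have "norm (z (Suc n) - z 0) \<le> norm (z (Suc n) - z n) + norm (z n - z 0)"
    using norm_triangle_ineq[of "z (Suc n) - z n" "z n - z 0"] by simp
  thus ?case using Suc by simp
qed simp

lemma chain_norm: "chainle K e x y M \<Longrightarrow> norm (y - x) \<le> M"
  unfolding chainle_def apply (elim exE conjE)
  subgoal for z n using telescope_norm[of z n] by simp
  done

lemma chain_trans:
  assumes "chainle K e x y M1" "chainle K e y w M2"
  shows "chainle K e x w (M1 + M2)"
proof -
  obtain z1 n1 where 1: "z1 0 = x" "z1 n1 = y" "\<forall>i\<le>n1. z1 i \<in> K" "\<forall>i<n1. norm (z1 (Suc i) - z1 i) \<le> e"
    "(\<Sum>i<n1. norm (z1 (Suc i) - z1 i)) \<le> M1" using assms(1) unfolding chainle_def by blast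
  obtain z2 n2 where 2: "z2 0 = y" "z2 n2 = w" "\<forall>i\<le>n2. z2 i \<in> K" "\<forall>i<n2. norm (z2 (Suc i) - z2 i) \<le> e"
    "(\<Sum>i<n2. norm (z2 (Suc i) - z2 i)) \<le> M2" using assms(2) unfolding chainle_def by blast
  define z where "z i = (if i \<le> n1 then z1 i else z2 (i - n1))" for i
  have zs: "z (n1 + i) = z2 i" for i using 1(2) 2(1) by (cases i) (auto simp: z_def)
  have s1: "(\<Sum>i<n1. norm (z (Suc i) - z i)) = (\<Sum>i<n1. norm (z1 (Suc i) - z1 i))"
    by (rule sum.cong) (auto simp: z_def)
  have s2: "(\<Sum>i<n2. norm (z (Suc (n1 + i)) - z (n1 + i))) = (\<Sum>i<n2. norm (z2 (Suc i) - z2 i))"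
    by (rule sum.cong) (auto simp: zs[symmetric])
  have "(\<Sum>i<n1+n2. norm (z (Suc i) - z i)) \<le> M1 + M2"
    unfolding sum_split_add using s1 s2 1(5) 2(5) by simp
  moreover have "z 0 = x" "z (n1 + n2) = w" using 1 2 zs[of n2] by (auto simp: z_def)
  moreover have "\<forall>i\<le>n1+n2. z i \<in> K"
  proof (intro allI impI)
    fix i assume i: "i \<le> n1 + n2"
    show "z i \<in> K"
    proof (cases "i \<le> n1")
      case True thus ?thesis using 1(3) by (simp add: z_def)
    next
      case False
      then obtain j where "i = n1 + j" "j \<le> n2" using i by (metis add_le_imp_le_left le_add_diff_inverse nat_le_linear)
      thus ?thesis using zs 2(3) by simp
    qed
  qed
  moreover have "\<forall>i<n1+n2. norm (z (Suc i) - z i) \<le> e"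
  proof (intro allI impI)
    fix i assume i: "i < n1 + n2"
    show "norm (z (Suc i) - z i) \<le> e"
    proof (cases "i < n1")
      case True thus ?thesis using 1(4) by (simp add: z_def)
    next
      case False
      then obtain j where "i = n1 + j" "j < n2" using i by (metis add_less_imp_less_left le_add_diff_inverse not_less)
      thus ?thesis using zs[of j] zs[of "Suc j"] 2(4) by simp
    qed
  qed
  ultimately show ?thesis unfolding chainle_def by blast
qed

lemma chain_split:
  assumes "chainle K e x y L" and e0: "0 \<le> e"
  shows "\<exists>m. chainle K e x m (L/2) \<and> chainle K e m y (L/2 + e)"
proof -
  obtain z n where z: "z 0 = x" "z n = y" "\<forall>i\<le>n. z i \<in> K" "\<forall>i<n. norm (z (Suc i) - z i) \<le> e"
    "(\<Sum>i<n. norm (z (Suc i) - z i)) \<le> L" using assms unfolding chainle_def by blast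
  define st where "st i = norm (z (Suc i) - z i)" for i
  define P where "P j = (\<Sum>i<j. st i)" for j
  define T where "T = P n"
  define J where "J = {j. j \<le> n \<and> P j \<le> T/2}"
  have T0: "0 \<le> T" unfolding T_def P_def st_def by (auto intro: sum_nonneg)
  have fJ: "finite J" unfolding J_def by auto
  have J0: "0 \<in> J" unfolding J_def P_def using T0 by auto
  define j where "j = Max J"
  have jJ: "j \<in> J" unfolding j_def using fJ J0 Max_in by blast
  have jn: "j \<le> n" and Pj: "P j \<le> T/2" using jJ unfolding J_def by auto
  have TL: "T \<le> L" using z(5) unfolding T_def P_def st_def by simp
  have c1: "chainle K e x (z j) (L/2)"
    unfolding chainle_def
  proof (intro exI[of _ z] exI[of _ j] conjI)
    show "z 0 = x" using z(1) .
    show "\<forall>i\<le>j. z i \<in> K" using z(3) jn by simp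
    show "\<forall>i<j. norm (z (Suc i) - z i) \<le> e" using z(4) jn by simp
    show "(\<Sum>i<j. norm (z (Suc i) - z i)) \<le> L / 2" using Pj TL unfolding P_def st_def by simp
  qed simp
  have split: "P n = P j + (\<Sum>i<n-j. st (j + i))"
    unfolding P_def using sum_split_add[of st j "n-j"] jn by simp
  have rest: "(\<Sum>i<n-j. st (j + i)) \<le> L/2 + e"
  proof (cases "j = n")
    case True
    thus ?thesis using True T0 TL e0 by simp
  next
    case False
    hence jn': "j < n" using jn by simp
    have "Suc j \<notin> J" using fJ j_def Max_ge by (metis Suc_n_not_le_n)
    hence "P (Suc j) > T/2" using jn' unfolding J_def by auto
    moreover have "P (Suc j) = P j + st j" unfolding P_def by simp
    moreover have "st j \<le> e" using z(4) jn' unfolding st_def by auto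
    ultimately show ?thesis using split TL unfolding T_def by linarith
  qed
  have c2: "chainle K e (z j) y (L/2 + e)"
    unfolding chainle_def
  proof (intro exI[of _ "\<lambda>i. z (j + i)"] exI[of _ "n - j"] conjI)
    show "z (j + (n - j)) = y" using z(2) jn by simp
    show "\<forall>i\<le>n - j. z (j + i) \<in> K" using z(3) jn by simp
    show "\<forall>i<n - j. norm (z (j + Suc i) - z (j + i)) \<le> e" using z(4) jn by simp
    show "(\<Sum>i<n - j. norm (z (j + Suc i) - z (j + i))) \<le> L / 2 + e" using rest unfolding st_def by simp
  qed simp
  show ?thesis using c1 c2 by blast
qed

definition rle :: "'a::real_normed_vector set \<Rightarrow> 'a \<Rightarrow> 'a \<Rightarrow> real \<Rightarrow> bool" where
  "rle K x y M \<longleftrightarrow> (\<forall>e>0. \<forall>\<eta>>0. chainle K e x y (M + \<eta>))"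

lemma rle_mono: "rle K x y M \<Longrightarrow> M \<le> M' \<Longrightarrow> rle K x y M'"
  unfolding rle_def by (meson add_le_cancel_right chain_mono order_refl)

lemma rle_trans: "rle K x y M1 \<Longrightarrow> rle K y w M2 \<Longrightarrow> rle K x w (M1 + M2)"
  unfolding rle_def
proof (intro allI impI)
  fix e \<eta> :: real assume a: "\<forall>e>0. \<forall>\<eta>>0. chainle K e x y (M1 + \<eta>)" "\<forall>e>0. \<forall>\<eta>>0. chainle K e y w (M2 + \<eta>)"
    and e: "e > 0" "\<eta> > 0"
  have "chainle K e x w ((M1 + \<eta>/2) + (M2 + \<eta>/2))"
    using chain_trans[of K e x y "M1 + \<eta>/2" w "M2 + \<eta>/2"] a e by auto
  thus "chainle K e x w (M1 + M2 + \<eta>)" by (simp add: algebra_simps)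
qed

lemma rle_norm: "rle K x y M \<Longrightarrow> norm (y - x) \<le> M"
proof -
  assume "rle K x y M"
  hence "norm (y - x) \<le> M + \<eta>" if "\<eta> > 0" for \<eta> using chain_norm that unfolding rle_def by blast
  thus ?thesis by (meson field_le_epsilon)
qed

lemma rle_mem: "rle K x y M \<Longrightarrow> x \<in> K \<and> y \<in> K"
  unfolding rle_def using chain_mem by (metis zero_less_one)

lemma rle_refl: "x \<in> K \<Longrightarrow> 0 \<le> M \<Longrightarrow> rle K x x M"
  unfolding rle_def by (auto intro: chain_refl)

lemma rle_mid:
  assumes K: "compact K" and r: "rle K x y M"
  shows "\<exists>m\<in>K. rle K x m (M/2) \<and> rle K m y (M/2)"
proof -
  define e :: "nat \<Rightarrow> real" where "e k = inverse (real (Suc k))" for k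
  have epos: "e k > 0" for k by (simp add: e_def)
  have "\<forall>k. \<exists>mk. chainle K (e k) x mk ((M + e k)/2) \<and> chainle K (e k) mk y ((M + e k)/2 + e k)"
  proof
    fix k
    have "chainle K (e k) x y (M + e k)" using r epos unfolding rle_def by blast
    from chain_split[OF this] epos[of k] show "\<exists>mk. chainle K (e k) x mk ((M + e k)/2) \<and> chainle K (e k) mk y ((M + e k)/2 + e k)"
      by (simp add: less_imp_le)
  qed
  then obtain m where m: "\<And>k. chainle K (e k) x (m k) ((M + e k)/2)" "\<And>k. chainle K (e k) (m k) y ((M + e k)/2 + e k)"
    by metis
  have mK: "\<forall>k. m k \<in> K" using m(1) chain_mem by blast
  obtain l r where l: "l \<in> K" "strict_mono r" "(m \<circ> r) \<longlonglongrightarrow> l"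
    using seq_compactE[OF compact_imp_seq_compact[OF K] mK] by blast
  have good: "\<exists>k. e (r k) < d \<and> norm (m (r k) - l) < d" if d: "d > 0" for d
  proof -
    obtain N1 where N1: "\<forall>k\<ge>N1. norm ((m \<circ> r) k - l) < d" using l(3) d unfolding LIMSEQ_iff by blast
    obtain N2 where N2: "inverse (real (Suc N2)) < d" using reals_Archimedean d by blast
    define k where "k = max N1 N2"
    have "N2 \<le> r k" using seq_suble[OF l(2), of k] by (simp add: k_def)
    hence "e (r k) \<le> inverse (real (Suc N2))" unfolding e_def by (simp add: le_imp_inverse_le)
    thus ?thesis using N1 N2 by (intro exI[of _ k]) (auto simp: k_def)
  qed
  have A: "rle K x l (M/2)" unfolding rle_def
  proof (intro allI impI)
    fix \<epsilon> \<eta> :: real assume pos: "\<epsilon> > 0" "\<eta> > 0"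
    define d where "d = min \<epsilon> (\<eta>/3)"
    have d: "d > 0" using pos by (simp add: d_def)
    obtain k where k: "e (r k) < d" "norm (m (r k) - l) < d" using good[OF d] by blast
    have c1: "chainle K \<epsilon> x (m (r k)) ((M + e (r k))/2)"
      using chain_mono[OF m(1)[of "r k"], of \<epsilon>] k d_def by auto
    have c2: "chainle K \<epsilon> (m (r k)) l d"
      using k mK l(1) by (intro chain_step) (auto simp: d_def norm_minus_commute)
    have "chainle K \<epsilon> x l ((M + e (r k))/2 + d)" using chain_trans[OF c1 c2] .
    thus "chainle K \<epsilon> x l (M/2 + \<eta>)"
    proof (rule chain_mono)
      have "d \<le> \<eta>/3" by (simp add: d_def)
      thus "(M + e (r k))/2 + d \<le> M/2 + \<eta>" using k pos by (simp add: field_simps)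
    qed simp
  qed
  have B: "rle K l y (M/2)" unfolding rle_def
  proof (intro allI impI)
    fix \<epsilon> \<eta> :: real assume pos: "\<epsilon> > 0" "\<eta> > 0"
    define d where "d = min \<epsilon> (\<eta>/3)"
    have d: "d > 0" using pos by (simp add: d_def)
    obtain k where k: "e (r k) < d" "norm (m (r k) - l) < d" using good[OF d] by blast
    have c1: "chainle K \<epsilon> (m (r k)) y ((M + e (r k))/2 + e (r k))"
      using chain_mono[OF m(2)[of "r k"], of \<epsilon>] k d_def by auto
    have c2: "chainle K \<epsilon> l (m (r k)) d"
      using k mK l(1) by (intro chain_step) (auto simp: d_def)
    have "chainle K \<epsilon> l y (d + ((M + e (r k))/2 + e (r k)))" using chain_trans[OF c2 c1] .
    thus "chainle K \<epsilon> l y (M/2 + \<eta>)"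
    proof (rule chain_mono)
      have "d \<le> \<eta>/3" by (simp add: d_def)
      thus "d + ((M + e (r k))/2 + e (r k)) \<le> M/2 + \<eta>" using k pos by (simp add: field_simps)
    qed simp
  qed
  show ?thesis using A B l(1) by blast
qed

definition mid :: "'a::real_normed_vector set \<Rightarrow> 'a \<Rightarrow> 'a \<Rightarrow> real \<Rightarrow> 'a" where
  "mid K x y M = (SOME m. m \<in> K \<and> rle K x m (M/2) \<and> rle K m y (M/2))"

lemma mid_prop:
  assumes "compact K" "rle K x y M"
  shows "mid K x y M \<in> K \<and> rle K x (mid K x y M) (M/2) \<and> rle K (mid K x y M) y (M/2)"
proof -
  have "\<exists>m. m \<in> K \<and> rle K x m (M/2) \<and> rle K m y (M/2)" using rle_mid[OF assms] by blast
  from someI_ex[OF this] show ?thesis unfolding mid_def .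
qed

primrec gseq :: "'a::real_normed_vector set \<Rightarrow> 'a \<Rightarrow> 'a \<Rightarrow> real \<Rightarrow> nat \<Rightarrow> nat \<Rightarrow> 'a" where
  "gseq K x y M 0 k = (if k = 0 then x else y)"
| "gseq K x y M (Suc n) k = (if even k then gseq K x y M n (k div 2)
     else mid K (gseq K x y M n (k div 2)) (gseq K x y M n (Suc (k div 2))) (M / 2^n))"

lemma gseq_ends: "gseq K x y M n 0 = x" "gseq K x y M n (2^n) = y"
  by (induction n) auto

lemma gseq_inv:
  assumes K: "compact K" and r: "rle K x y M"
  shows "\<forall>k<2^n. rle K (gseq K x y M n k) (gseq K x y M n (Suc k)) (M / 2^n)"
proof (induction n)
  case 0 thus ?case using r by simp
next
  case (Suc n)
  show ?case
  proof (intro allI impI)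
    fix k :: nat assume k: "k < 2 ^ Suc n"
    define j where "j = k div 2"
    have j: "j < 2^n" using k by (simp add: j_def less_mult_imp_div_less)
    have R: "rle K (gseq K x y M n j) (gseq K x y M n (Suc j)) (M / 2^n)" using Suc j by blast
    have h: "M / 2^n / 2 = M / 2 ^ Suc n" by simp
    note mp = mid_prop[OF K R, unfolded h]
    show "rle K (gseq K x y M (Suc n) k) (gseq K x y M (Suc n) (Suc k)) (M / 2 ^ Suc n)"
    proof (cases "even k")
      case True
      hence "Suc k div 2 = j" "odd (Suc k)" unfolding j_def by auto
      thus ?thesis using True mp by (simp add: j_def)
    next
      case False
      hence "Suc k div 2 = Suc j" "even (Suc k)" unfolding j_def by (auto elim!: oddE)
      thus ?thesis using False mp by (simp add: j_def)
    qed
  qed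
qed

lemma gseq_mem:
  assumes K: "compact K" and r: "rle K x y M" and k: "k \<le> 2^n"
  shows "gseq K x y M n k \<in> K"
proof (cases "k < 2^n")
  case True thus ?thesis using gseq_inv[OF K r] rle_mem by blast
next
  case False
  hence "k = 2^n" using k by simp
  thus ?thesis using gseq_ends(2)[of K x y M n] rle_mem[OF r] by simp
qed

lemma gseq_dist:
  assumes K: "compact K" and r: "rle K x y M" and jk: "j \<le> k" "k \<le> 2^n"
  shows "norm (gseq K x y M n k - gseq K x y M n j) \<le> real (k - j) * (M / 2^n)"
  using jk
proof (induction k)
  case 0 thus ?case by simp
next
  case (Suc k)
  show ?case
  proof (cases "j = Suc k")
    case True thus ?thesis by simp
  next
    case False
    hence jk': "j \<le> k" "k < 2^n" using Suc by auto
    have IH: "norm (gseq K x y M n k - gseq K x y M n j) \<le> real (k - j) * (M / 2^n)" using Suc jk' by simp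
    have st: "norm (gseq K x y M n (Suc k) - gseq K x y M n k) \<le> M / 2^n"
      using gseq_inv[OF K r] jk' rle_norm by blast
    have "norm (gseq K x y M n (Suc k) - gseq K x y M n j) \<le>
        norm (gseq K x y M n (Suc k) - gseq K x y M n k) + norm (gseq K x y M n k - gseq K x y M n j)"
      using norm_triangle_ineq[of "gseq K x y M n (Suc k) - gseq K x y M n k" "gseq K x y M n k - gseq K x y M n j"] by simp
    also have "\<dots> \<le> M / 2^n + real (k - j) * (M / 2^n)" using st IH by simp
    also have "\<dots> = real (Suc k - j) * (M / 2^n)"
    proof -
      have "real (Suc k - j) = 1 + real (k - j)" using jk' by (simp add: Suc_diff_le)
      thus ?thesis by (simp add: field_simps)
    qed
    finally show ?thesis .
  qed
qed

lemma floor_double: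
  fixes x :: real assumes "0 \<le> x"
  shows "nat \<lfloor>2 * x\<rfloor> = 2 * nat \<lfloor>x\<rfloor> \<or> nat \<lfloor>2 * x\<rfloor> = 2 * nat \<lfloor>x\<rfloor> + 1"
proof -
  have a: "2 * \<lfloor>x\<rfloor> \<le> \<lfloor>2 * x\<rfloor>" by (simp add: le_floor_iff)
  have b: "\<lfloor>2 * x\<rfloor> \<le> 2 * \<lfloor>x\<rfloor> + 1"
  proof -
    have "real_of_int \<lfloor>2 * x\<rfloor> \<le> 2 * x" by simp
    also have "\<dots> < 2 * (real_of_int \<lfloor>x\<rfloor> + 1)" by (simp only: distrib_left) (use real_of_int_floor_add_one_gt[of x] in linarith)
    finally show ?thesis by linarith
  qed
  have x0: "0 \<le> \<lfloor>x\<rfloor>" using assms by simp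
  have "\<lfloor>2*x\<rfloor> = 2*\<lfloor>x\<rfloor> \<or> \<lfloor>2*x\<rfloor> = 2*\<lfloor>x\<rfloor> + 1" using a b by linarith
  thus ?thesis using x0 by (auto simp: nat_mult_distrib nat_add_distrib)
qed

lemma small_pow:
  fixes M e :: real assumes "0 \<le> M" "0 < e"
  shows "\<exists>N. M / 2^N < e"
proof -
  obtain N where N: "(1/2::real)^N < e / (M + 1)" using real_arch_pow_inv[of "e/(M+1)" "1/2"] assms by auto
  have "M / 2^N = M * (1/2)^N" by (simp add: power_one_over)
  also have "\<dots> \<le> M * (e / (M+1))" using N assms by (intro mult_left_mono) auto
  also have "\<dots> < e" using assms by (simp add: field_simps)
  finally show ?thesis by blast
qed

lemma le_by_pow:
  fixes A B M :: real assumes "0 \<le> M" "\<And>n. A \<le> B + M / 2^n"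
  shows "A \<le> B"
proof (rule field_le_epsilon)
  fix e :: real assume "0 < e"
  then obtain N where "M / 2^N < e" using small_pow assms(1) by blast
  thus "A \<le> B + e" using assms(2)[of N] by linarith
qed

lemma mono_chain:
  fixes t :: "nat \<Rightarrow> real"
  assumes "\<forall>j<n. t j \<le> t (Suc j)" "i \<le> j" "j \<le> n"
  shows "t i \<le> t j"
  using assms(2,3)
proof (induction j)
  case (Suc j)
  show ?case
  proof (cases "i = Suc j")
    case False
    hence "t i \<le> t j" using Suc by simp
    moreover have "t j \<le> t (Suc j)" using assms(1) Suc(3) by simp
    ultimately show ?thesis by simp
  qed simp
qed simp

lemma rle_path:
  fixes K :: "'a::euclidean_space set"
  assumes K: "compact K" and r: "rle K x y M"
  shows "\<exists>\<gamma>. rectifiable_path_in K 0 1 \<gamma> \<and> \<gamma> 0 = x \<and> \<gamma> 1 = y \<and> path_length_on 0 1 \<gamma> \<le> M"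
proof -
  have M0: "0 \<le> M" using rle_norm[OF r] norm_ge_zero order_trans by blast
  define kk where "kk n t = nat \<lfloor>t * 2^n\<rfloor>" for n :: nat and t :: real
  define s where "s t n = gseq K x y M n (kk n t)" for t n
  have kkle: "kk n t \<le> 2^n" if "t \<in> {0..1}" for n t
  proof -
    have "t * 2^n \<le> 2^n" using that by (simp add: mult_left_le_one_le)
    hence "\<lfloor>t * 2^n\<rfloor> \<le> \<lfloor>(2::real)^n\<rfloor>" by (rule floor_mono)
    hence "\<lfloor>t * 2^n\<rfloor> \<le> 2^n" by simp
    thus ?thesis unfolding kk_def by (simp add: nat_le_iff)
  qed
  have sK: "s t n \<in> K" if "t \<in> {0..1}" for t n
    unfolding s_def using gseq_mem[OF K r kkle[OF that]] .
  have stp: "norm (s t (Suc n) - s t n) \<le> M / 2^Suc n" if t: "t \<in> {0..1}" for t n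
  proof -
    have "kk (Suc n) t = nat \<lfloor>2 * (t * 2^n)\<rfloor>" unfolding kk_def by (simp add: algebra_simps)
    with floor_double[of "t * 2^n"] t
    have c: "kk (Suc n) t = 2 * kk n t \<or> kk (Suc n) t = 2 * kk n t + 1" unfolding kk_def by auto
    have e: "gseq K x y M (Suc n) (2 * kk n t) = s t n" unfolding s_def by simp
    show ?thesis
    proof (cases "kk (Suc n) t = 2 * kk n t")
      case True thus ?thesis using e M0 unfolding s_def by simp
    next
      case False
      hence c1: "kk (Suc n) t = Suc (2 * kk n t)" using c by simp
      hence "2 * kk n t < 2^Suc n" using kkle[OF t, of "Suc n"] by simp
      hence "rle K (gseq K x y M (Suc n) (2 * kk n t)) (gseq K x y M (Suc n) (Suc (2 * kk n t))) (M / 2^Suc n)"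
        using gseq_inv[OF K r] by blast
      from rle_norm[OF this] show ?thesis using e c1 unfolding s_def[of t "Suc n"] by simp
    qed
  qed
  have cb: "norm (s t m - s t n) \<le> M / 2^n - M / 2^m" if t: "t \<in> {0..1}" and nm: "n \<le> m" for t n m
    using nm
  proof (induction m rule: dec_induct)
    case base thus ?case by simp
  next
    case (step m)
    have "norm (s t (Suc m) - s t n) \<le> norm (s t (Suc m) - s t m) + norm (s t m - s t n)"
      using norm_triangle_ineq[of "s t (Suc m) - s t m" "s t m - s t n"] by simp
    also have "\<dots> \<le> M / 2^Suc m + (M / 2^n - M / 2^m)" using step.IH stp[OF t, of m] by simp
    also have "\<dots> = M / 2^n - M / 2^Suc m" by (simp add: field_simps)
    finally show ?case .
  qed
  have cb2: "norm (s t m - s t n) \<le> M / 2^n" if t: "t \<in> {0..1}" and nm: "n \<le> m" for t n m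
  proof -
    have "0 \<le> M / 2^m" using M0 by simp
    thus ?thesis using cb[OF t nm] by linarith
  qed
  have conv: "convergent (s t)" if t: "t \<in> {0..1}" for t
    unfolding Cauchy_convergent_iff[symmetric]
  proof (rule CauchyI)
    fix e :: real assume e: "0 < e"
    obtain N where N: "M / 2^N < e" using small_pow[OF M0 e] by blast
    have "norm (s t m - s t n) < e" if "m \<ge> N" "n \<ge> N" for m n
    proof (cases "n \<le> m")
      case True
      have "M / 2^n \<le> M / 2^N" using that M0 by (intro divide_left_mono) auto
      thus ?thesis using cb2[OF t True] N by linarith
    next
      case False
      have "M / 2^m \<le> M / 2^N" using that M0 by (intro divide_left_mono) auto
      thus ?thesis using cb2[OF t, of m n] False N by (simp add: norm_minus_commute)
    qed
    thus "\<exists>N. \<forall>m\<ge>N. \<forall>n\<ge>N. norm (s t m - s t n) < e" by blast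
  qed
  define \<gamma> where "\<gamma> t = lim (s t)" for t
  have lim: "s t \<longlonglongrightarrow> \<gamma> t" if "t \<in> {0..1}" for t
    using conv[OF that] unfolding \<gamma>_def convergent_LIMSEQ_iff .
  have gK: "\<gamma> t \<in> K" if t: "t \<in> {0..1}" for t
    using closed_sequentially[OF compact_imp_closed[OF K] sK[OF t] lim[OF t]] .
  have gb: "norm (\<gamma> t - s t n) \<le> M / 2^n" if t: "t \<in> {0..1}" for t n
  proof -
    have "(\<lambda>m. norm (s t m - s t n)) \<longlonglongrightarrow> norm (\<gamma> t - s t n)"
      by (intro tendsto_intros lim[OF t])
    thus ?thesis using cb2[OF t] by (intro Lim_bounded[where M = n]) auto
  qed
  have kdiff: "real (kk n b) - real (kk n a) \<le> (b - a) * 2^n + 1" if "a \<in> {0..1}" "b \<in> {0..1}" for a b n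
  proof -
    have "real (kk n b) = real_of_int \<lfloor>b * 2^n\<rfloor>" "real (kk n a) = real_of_int \<lfloor>a * 2^n\<rfloor>"
      using that unfolding kk_def by auto
    moreover have "real_of_int \<lfloor>b * 2^n\<rfloor> \<le> b * 2^n" by simp
    moreover have "a * 2^n < real_of_int \<lfloor>a * 2^n\<rfloor> + 1" by (rule real_of_int_floor_add_one_gt)
    moreover have "(b - a) * 2^n = b * 2^n - a * 2^n" by (simp add: algebra_simps)
    ultimately show ?thesis by linarith
  qed
  have sdiff: "norm (s b n - s a n) \<le> M * \<bar>b - a\<bar> + M / 2^n" if ab: "a \<in> {0..1}" "b \<in> {0..1}" for a b n
  proof (cases "kk n a \<le> kk n b")
    case True
    have "norm (s b n - s a n) \<le> real (kk n b - kk n a) * (M / 2^n)"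
      unfolding s_def using gseq_dist[OF K r True kkle[OF ab(2)]] .
    also have "\<dots> \<le> ((b - a) * 2^n + 1) * (M / 2^n)"
      using kdiff[OF ab, of n] True M0 by (intro mult_right_mono) (auto simp: of_nat_diff)
    also have "\<dots> \<le> (\<bar>b - a\<bar> * 2^n + 1) * (M / 2^n)"
      using M0 by (intro mult_right_mono) auto
    also have "\<dots> = M * \<bar>b - a\<bar> + M / 2^n" by (simp add: field_simps)
    finally show ?thesis .
  next
    case False
    hence F: "kk n b \<le> kk n a" by simp
    have "norm (s b n - s a n) = norm (s a n - s b n)" by (rule norm_minus_commute)
    also have "\<dots> \<le> real (kk n a - kk n b) * (M / 2^n)"
      unfolding s_def using gseq_dist[OF K r F kkle[OF ab(1)]] .
    also have "\<dots> \<le> ((a - b) * 2^n + 1) * (M / 2^n)"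
      using kdiff[OF ab(2,1), of n] F M0 by (intro mult_right_mono) (auto simp: of_nat_diff)
    also have "\<dots> \<le> (\<bar>b - a\<bar> * 2^n + 1) * (M / 2^n)"
      using M0 by (intro mult_right_mono) auto
    also have "\<dots> = M * \<bar>b - a\<bar> + M / 2^n" by (simp add: field_simps)
    finally show ?thesis .
  qed
  have lip: "norm (\<gamma> b - \<gamma> a) \<le> M * \<bar>b - a\<bar>" if ab: "a \<in> {0..1}" "b \<in> {0..1}" for a b
  proof (rule le_by_pow[of "3 * M"])
    show "0 \<le> 3 * M" using M0 by simp
    fix n
    have "norm (\<gamma> b - \<gamma> a) \<le> norm (\<gamma> b - s b n) + norm (s b n - s a n) + norm (s a n - \<gamma> a)"
      using norm_triangle_ineq[of "\<gamma> b - s b n" "s b n - s a n"] norm_triangle_ineq[of "\<gamma> b - s a n" "s a n - \<gamma> a"] by simp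
    also have "\<dots> \<le> M / 2^n + (M * \<bar>b - a\<bar> + M / 2^n) + M / 2^n"
      using gb[OF ab(2), of n] gb[OF ab(1), of n] sdiff[OF ab, of n] by (simp add: norm_minus_commute)
    also have "\<dots> = M * \<bar>b - a\<bar> + 3 * M / 2^n" by simp
    finally show "norm (\<gamma> b - \<gamma> a) \<le> M * \<bar>b - a\<bar> + 3 * M / 2^n" .
  qed
  have g0: "\<gamma> 0 = x"
  proof -
    have "s 0 = (\<lambda>n. x)" unfolding s_def kk_def by (auto simp: gseq_ends)
    thus ?thesis unfolding \<gamma>_def by simp
  qed
  have g1: "\<gamma> 1 = y"
  proof -
    have "kk n 1 = 2^n" for n unfolding kk_def by simp
    hence "s 1 = (\<lambda>n. y)" unfolding s_def by (auto simp: gseq_ends)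
    thus ?thesis unfolding \<gamma>_def by simp
  qed
  have cont: "continuous_on {0..1} \<gamma>"
  proof (rule lipschitz_on_continuous_on)
    show "M-lipschitz_on {0..1} \<gamma>"
    proof (rule lipschitz_onI)
      fix a b :: real assume "a \<in> {0..1}" "b \<in> {0..1}"
      thus "dist (\<gamma> a) (\<gamma> b) \<le> M * dist a b" using lip[of b a] by (simp add: dist_norm dist_real_def)
    qed (rule M0)
  qed
  have plb: "p \<le> M" if pP: "p \<in> polygon_lengths 0 1 \<gamma>" for p
  proof -
    obtain t n where t: "p = (\<Sum>j<n. norm (\<gamma> (t (Suc j)) - \<gamma> (t j)))" "t 0 = 0" "t n = 1"
      "\<forall>j<n. t j \<le> t (Suc j)" using pP unfolding polygon_lengths_def by blast
    have tin: "t j \<in> {0..1}" if jn: "j \<le> n" for j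
      using mono_chain[OF t(4) _ jn, of 0] mono_chain[OF t(4) jn order_refl] t(2,3) by auto
    have "p \<le> (\<Sum>j<n. M * (t (Suc j) - t j))"
      unfolding t(1)
    proof (rule sum_mono)
      fix j assume "j \<in> {..<n}"
      hence j: "j < n" by simp
      have "norm (\<gamma> (t (Suc j)) - \<gamma> (t j)) \<le> M * \<bar>t (Suc j) - t j\<bar>"
        using lip[OF tin tin] j by simp
      thus "norm (\<gamma> (t (Suc j)) - \<gamma> (t j)) \<le> M * (t (Suc j) - t j)" using t(4) j by simp
    qed
    also have "\<dots> = M * (t n - t 0)" by (simp add: sum_distrib_left[symmetric] sum_lessThan_telescope)
    finally show ?thesis using t by simp
  qed
  have bdd: "bdd_above (polygon_lengths 0 1 \<gamma>)" using plb by (auto simp: bdd_above_def)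
  have "path_length_on 0 1 \<gamma> \<le> M" unfolding path_length_on_def
    using pl_single[of 0 1 \<gamma>] plb by (intro cSup_least) auto
  moreover have "rectifiable_path_in K 0 1 \<gamma>" unfolding rectifiable_path_in_def
    using cont gK bdd by auto
  ultimately show ?thesis using g0 g1 by blast
qed

definition psi :: "real \<Rightarrow> real" where "psi q = (max 0 (1 - q))^2"
definition dpsi :: "real \<Rightarrow> real" where "dpsi q = - 2 * max 0 (1 - q)"

lemma psi_deriv: "(psi has_real_derivative dpsi q) (at q)"
proof (cases "q < 1")
  case True
  have "((\<lambda>q. (1 - q)^2) has_real_derivative (- 2 * (1 - q))) (at q)"
    by (rule derivative_eq_intros refl | simp)+
  moreover have "\<forall>y\<in>{..<1}. (1 - y)^2 = psi y" by (auto simp: psi_def)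
  ultimately have "(psi has_real_derivative (- 2 * (1 - q))) (at q)"
    using True has_field_derivative_transform_within_open[of "\<lambda>q. (1 - q)^2" "- 2 * (1 - q)" q "{..<1}" psi]
    by simp
  moreover have "dpsi q = - 2 * (1 - q)" using True by (simp add: dpsi_def)
  ultimately show ?thesis by simp
next
  case False
  show ?thesis
  proof (cases "q = 1")
    case q1: True
    have "((\<lambda>y. (psi y - psi q) / (y - q)) \<longlongrightarrow> 0) (at q)"
    proof (rule Lim_null_comparison)
      show "\<forall>\<^sub>F y in at q. norm ((psi y - psi q) / (y - q)) \<le> \<bar>y - q\<bar>"
      proof (rule always_eventually, rule allI)
        fix y
        show "norm ((psi y - psi q) / (y - q)) \<le> \<bar>y - q\<bar>"
        proof (cases "y < 1")
          case True
          have "psi y = (1 - y) * (1 - y)" using True by (simp add: psi_def power2_eq_square)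
          moreover have "psi q = 0" using q1 by (simp add: psi_def)
          moreover have "y - 1 \<noteq> 0" using True by simp
          ultimately have "(psi y - psi q) / (y - q) = y - 1" using q1 by (simp add: field_simps)
          thus ?thesis using q1 by simp
        next
          case False
          hence "psi y = 0" "psi q = 0" using q1 by (simp_all add: psi_def)
          thus ?thesis by simp
        qed
      qed
      show "((\<lambda>y. \<bar>y - q\<bar>) \<longlongrightarrow> 0) (at q)"
        by (rule tendsto_rabs_zero, rule LIM_zero, rule tendsto_ident_at)
    qed
    moreover have "dpsi q = 0" using q1 by (simp add: dpsi_def)
    ultimately show ?thesis by (simp add: has_field_derivative_iff)
  next
    case q2: False
    hence q: "q > 1" using False by simp
    have "((\<lambda>q. 0) has_real_derivative 0) (at q)" by simp
    moreover have "\<forall>y\<in>{1<..}. 0 = psi y" by (auto simp: psi_def)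
    ultimately have "(psi has_real_derivative 0) (at q)"
      using q has_field_derivative_transform_within_open[of "\<lambda>q. 0" 0 q "{1<..}" psi] by simp
    moreover have "dpsi q = 0" using q by (simp add: dpsi_def)
    ultimately show ?thesis by simp
  qed
qed

lemma psi_nonneg: "0 \<le> psi q" by (simp add: psi_def)
lemma psi_zero: "1 \<le> q \<Longrightarrow> psi q = 0" by (simp add: psi_def)
lemma dpsi_zero: "1 \<le> q \<Longrightarrow> dpsi q = 0" by (simp add: dpsi_def)
lemma dpsi_bound: "0 \<le> q \<Longrightarrow> \<bar>dpsi q\<bar> \<le> 2" by (simp add: dpsi_def)
lemma psi_quarter: "q \<le> 1/4 \<Longrightarrow> 9/16 \<le> psi q"
proof -
  assume q: "q \<le> 1/4"
  have "max 0 (1 - q) = 1 - q" using q by simp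
  moreover have "(3/4)^2 \<le> (1 - q)^2" using q by (intro power_mono) auto
  ultimately have "(3/4)^2 \<le> (max 0 (1 - q))^2" by simp
  thus ?thesis by (simp add: psi_def power2_eq_square)
qed
lemma continuous_on_dpsi: "continuous_on S dpsi" unfolding dpsi_def by (intro continuous_intros)
lemma continuous_on_psi: "continuous_on S psi" unfolding psi_def by (intro continuous_intros)

definition lat :: "real \<Rightarrow> ('a \<Rightarrow> int) \<Rightarrow> 'a::euclidean_space" where
  "lat r k = (\<Sum>b\<in>Basis. (r * of_int (k b)) *\<^sub>R b)"

lemma lat_inner: "b \<in> Basis \<Longrightarrow> inner (lat r k) b = r * of_int (k b)"
  unfolding lat_def by (simp add: inner_sum_left_Basis)

lemma lat_near:
  fixes z :: "'a::euclidean_space"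
  assumes r: "r > 0" and B: "norm z \<le> B" and m: "B / r + 1 \<le> of_int m"
  shows "\<exists>k\<in>Basis \<rightarrow>\<^sub>E {-m..m}. norm (z - lat r k) \<le> real DIM('a) * r / 2"
proof -
  define k where "k = (\<lambda>b\<in>Basis. \<lfloor>inner z b / r + 1/2\<rfloor>)"
  have co: "\<bar>inner z b - r * of_int (k b)\<bar> \<le> r / 2" if b: "b \<in> Basis" for b
  proof -
    let ?u = "inner z b / r"
    have k: "k b = \<lfloor>?u + 1/2\<rfloor>" using b by (simp add: k_def)
    have "of_int (k b) \<le> ?u + 1/2" "?u + 1/2 < of_int (k b) + 1" unfolding k by linarith+
    hence "\<bar>?u - of_int (k b)\<bar> \<le> 1/2" by linarith
    hence "r * \<bar>?u - of_int (k b)\<bar> \<le> r * (1/2)" using r by (intro mult_left_mono) auto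
    moreover have "r * \<bar>?u - of_int (k b)\<bar> = \<bar>r * (?u - of_int (k b))\<bar>"
      using r by (simp add: abs_mult)
    moreover have "r * (?u - of_int (k b)) = inner z b - r * of_int (k b)"
      using r by (simp add: field_simps)
    ultimately show ?thesis by simp
  qed
  have kin: "k \<in> Basis \<rightarrow>\<^sub>E {-m..m}"
  proof -
    have "k b \<in> {-m..m}" if b: "b \<in> Basis" for b
    proof -
      have zb: "\<bar>inner z b\<bar> \<le> B" using Basis_le_norm[OF b, of z] B by simp
      have "\<bar>inner z b / r\<bar> \<le> B / r" using zb r by (simp add: abs_divide divide_right_mono)
      hence a: "- (B/r) \<le> inner z b / r" "inner z b / r \<le> B/r" by linarith+
      have "real_of_int (-m) \<le> inner z b / r + 1/2" using a m by (simp only: of_int_minus)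
      hence 1: "-m \<le> \<lfloor>inner z b / r + 1/2\<rfloor>" by (simp only: le_floor_iff)
      have "inner z b / r + 1/2 < real_of_int m + 1" using a m by linarith
      hence 2: "\<lfloor>inner z b / r + 1/2\<rfloor> \<le> m" by (simp only: floor_le_iff)
      show ?thesis using b 1 2 by (simp add: k_def)
    qed
    thus ?thesis unfolding k_def by auto
  qed
  have "norm (z - lat r k) \<le> (\<Sum>b\<in>Basis. \<bar>inner (z - lat r k) b\<bar>)" by (rule norm_le_l1)
  also have "\<dots> \<le> (\<Sum>b\<in>(Basis::'a set). r / 2)"
  proof (rule sum_mono)
    fix b :: 'a assume b: "b \<in> Basis"
    show "\<bar>inner (z - lat r k) b\<bar> \<le> r / 2" using co[OF b] b by (simp add: inner_diff_left lat_inner)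
  qed
  also have "\<dots> = real DIM('a) * r / 2" by simp
  finally show ?thesis using kin by blast
qed

definition lat_box :: "'a::euclidean_space \<Rightarrow> real \<Rightarrow> int \<Rightarrow> ('a \<Rightarrow> int) set" where
  "lat_box z r D = (PiE Basis (\<lambda>b. {\<lceil>inner z b / r\<rceil> - D .. \<lfloor>inner z b / r\<rfloor> + D}))"

lemma lat_active:
  fixes z :: "'a::euclidean_space"
  assumes r: "r > 0" and k: "k \<in> Basis \<rightarrow>\<^sub>E UNIV" and n: "norm (z - lat r k) < of_int D * r"
  shows "k \<in> lat_box z r D"
proof -
  have "k b \<in> {\<lceil>inner z b / r\<rceil> - D .. \<lfloor>inner z b / r\<rfloor> + D}" if b: "b \<in> Basis" for b
  proof -
    have "\<bar>inner z b - r * of_int (k b)\<bar> < of_int D * r"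
      using Basis_le_norm[OF b, of "z - lat r k"] n by (simp add: inner_diff_left lat_inner b)
    hence "\<bar>inner z b / r - of_int (k b)\<bar> < of_int D"
      using r by (simp add: abs_less_iff field_simps)
    hence "inner z b / r - of_int D < of_int (k b)" "of_int (k b) < inner z b / r + of_int D" by linarith+
    hence h: "inner z b / r \<le> of_int (k b + D)" "of_int (k b - D) \<le> inner z b / r" by simp_all
    have "\<lceil>inner z b / r\<rceil> \<le> k b + D" using h(1) by (simp only: ceiling_le_iff)
    moreover have "k b - D \<le> \<lfloor>inner z b / r\<rfloor>" using h(2) by (simp only: le_floor_iff)
    ultimately show ?thesis by simp
  qed
  thus ?thesis using k unfolding lat_box_def by auto
qed

lemma lat_box_card:
  assumes "0 \<le> D"
  shows "card (lat_box (z::'a::euclidean_space) r D) \<le> (2 * nat D + 1) ^ DIM('a)"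
proof -
  have "card (lat_box z r D) = (\<Prod>b\<in>Basis. card {\<lceil>inner z b / r\<rceil> - D .. \<lfloor>inner z b / r\<rfloor> + D})"
    unfolding lat_box_def by (simp add: card_PiE)
  also have "\<dots> \<le> (2 * nat D + 1) ^ card (Basis :: 'a set)"
  proof (rule prod_le_power)
    fix b :: 'a
    have "\<lfloor>inner z b / r\<rfloor> \<le> \<lceil>inner z b / r\<rceil>" by (simp add: floor_le_ceiling)
    hence "nat (\<lfloor>inner z b / r\<rfloor> + D - (\<lceil>inner z b / r\<rceil> - D) + 1) \<le> 2 * nat D + 1"
      using assms by linarith
    thus "0 \<le> card {\<lceil>inner z b / r\<rceil> - D .. \<lfloor>inner z b / r\<rfloor> + D} \<and>
        card {\<lceil>inner z b / r\<rceil> - D .. \<lfloor>inner z b / r\<rfloor> + D} \<le> 2 * nat D + 1" by simp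
  qed auto
  finally show ?thesis by simp
qed

lemma lat_box_finite: "finite (lat_box z r D)"
  unfolding lat_box_def by (intro finite_PiE) auto

lemma bump_deriv:
  fixes c z :: "'a::euclidean_space"
  assumes s0: "s \<noteq> 0"
  shows "((\<lambda>z. psi (inner (z - c) (z - c) / s^2)) has_derivative
     (\<lambda>h. inner ((dpsi (inner (z - c) (z - c) / s^2) * 2 / s^2) *\<^sub>R (z - c)) h)) (at z)"
proof -
  have q: "((\<lambda>z. inner (z - c) (z - c) / s^2) has_derivative (\<lambda>h. (inner (z - c) h + inner h (z - c)) / s^2)) (at z)"
    by (rule derivative_eq_intros refl | simp add: s0)+
  have "((\<lambda>z. psi (inner (z - c) (z - c) / s^2)) has_derivative
      (\<lambda>h. (inner (z - c) h + inner h (z - c)) / s^2 * dpsi (inner (z - c) (z - c) / s^2))) (at z)"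
    by (rule DERIV_compose_FDERIV[OF psi_deriv q])
  moreover have "(\<lambda>h. (inner (z - c) h + inner h (z - c)) / s^2 * dpsi (inner (z - c) (z - c) / s^2)) =
      (\<lambda>h. inner ((dpsi (inner (z - c) (z - c) / s^2) * 2 / s^2) *\<^sub>R (z - c)) h)"
  proof (rule ext)
    fix h
    have g: "(a + a) / s^2 * D = (D * 2 / s^2) * a" for a D :: real by (simp add: field_simps)
    show "(inner (z - c) h + inner h (z - c)) / s^2 * dpsi (inner (z - c) (z - c) / s^2) =
      inner ((dpsi (inner (z - c) (z - c) / s^2) * 2 / s^2) *\<^sub>R (z - c)) h"
      unfolding inner_scaleR_left inner_commute[of h "z - c"] by (rule g)
  qed
  ultimately show ?thesis by simp
qed

lemma continuous_on_psi_comp[continuous_intros]: "continuous_on S g \<Longrightarrow> continuous_on S (\<lambda>x. psi (g x))"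
  by (rule continuous_on_compose2[OF continuous_on_psi[of UNIV]]) auto

lemma continuous_on_dpsi_comp[continuous_intros]: "continuous_on S g \<Longrightarrow> continuous_on S (\<lambda>x. dpsi (g x))"
  by (rule continuous_on_compose2[OF continuous_on_dpsi[of UNIV]]) auto

lemma has_derivative_C1limit:
  fixes f :: "'a::euclidean_space \<Rightarrow> real"
  assumes "(f has_derivative (\<lambda>h. inner D h)) (at z)"
  shows "((\<lambda>y. (f y - f z - inner D (y - z)) / norm (y - z)) \<longlongrightarrow> 0) (at z within K)"
proof -
  have "(f has_derivative (\<lambda>h. inner D h)) (at z within K)"
    using assms by (rule has_derivative_subset) simp
  hence "((\<lambda>y. (1 / norm (y - z)) *\<^sub>R (f y - (f z + inner D (y - z)))) \<longlongrightarrow> 0) (at z within K)"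
    unfolding has_derivative_within by blast
  moreover have "(\<lambda>y. (1 / norm (y - z)) *\<^sub>R (f y - (f z + inner D (y - z)))) = (\<lambda>y. (f y - f z - inner D (y - z)) / norm (y - z))"
    by (rule ext) (simp add: divide_inverse mult.commute diff_diff_eq)
  ultimately show ?thesis by simp
qed

definition Acst :: "'a::euclidean_space itself \<Rightarrow> real" where
  "Acst (_::'a itself) = 29 * real ((2 * DIM('a) + 1) ^ DIM('a))"

lemma smooth_approx:
  fixes K :: "'a::euclidean_space set" and \<phi> :: "'a \<Rightarrow> real"
  assumes K: "compact K" "K \<noteq> {}" and \<epsilon>: "\<epsilon> > 0" and \<eta>: "\<eta> > 0"
    and \<phi>r: "\<And>z. z \<in> K \<Longrightarrow> 0 \<le> \<phi> z \<and> \<phi> z \<le> R"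
    and \<phi>l: "\<And>z w. z \<in> K \<Longrightarrow> w \<in> K \<Longrightarrow> norm (w - z) \<le> \<epsilon> \<Longrightarrow> \<phi> w \<le> \<phi> z + norm (w - z)"
  shows "\<exists>f df. is_C1_deriv K f df \<and> (\<forall>z\<in>K. 0 \<le> f z \<and> f z \<le> R) \<and>
           (\<forall>z\<in>K. norm (df z) \<le> Acst TYPE('a)) \<and> (\<forall>z\<in>K. \<bar>f z - \<phi> z\<bar> \<le> \<eta>)"
proof -
  define d where "d = real DIM('a)"
  have d1: "1 \<le> d" using DIM_positive[where 'a='a] unfolding d_def by linarith
  define s where "s = min (\<epsilon>/4) (\<eta>/2)"
  have s0: "s > 0" using \<epsilon> \<eta> by (simp add: s_def)
  have s\<epsilon>: "4 * s \<le> \<epsilon>" and s\<eta>: "2 * s \<le> \<eta>" by (auto simp: s_def)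
  define r where "r = s / d"
  have r0: "r > 0" using s0 d1 by (simp add: r_def)
  have dr: "d * r = s" using d1 by (simp add: r_def)
  obtain B where B: "\<forall>z\<in>K. norm z \<le> B" using compact_imp_bounded[OF K(1)] bounded_iff by blast
  define m where "m = \<lceil>B/r\<rceil> + 1"
  have m: "B/r + 1 \<le> of_int m" unfolding m_def by (simp add: le_of_int_ceiling)
  define I where "I = (Basis \<rightarrow>\<^sub>E {-m..m} :: ('a \<Rightarrow> int) set)"
  have fI: "finite I" unfolding I_def by (intro finite_PiE) auto
  define c where "c k = (lat r k :: 'a)" for k
  define ex where "ex k \<longleftrightarrow> (\<exists>p\<in>K. norm (p - c k) < s)" for k
  define p where "p k = (SOME p. p \<in> K \<and> norm (p - c k) < s)" for k
  define a where "a k = (if ex k then \<phi> (p k) else 0)" for k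
  define q where "q k z = inner (z - c k) (z - c k) / s^2" for k z
  define bk where "bk k z = psi (q k z)" for k z
  define S where "S = (\<lambda>z. \<Sum>k\<in>I. bk k z)"
  define N where "N = (\<lambda>z. \<Sum>k\<in>I. a k * bk k z)"
  define f where "f = (\<lambda>z. N z / S z)"
  define G where "G k z = (dpsi (q k z) * 2 / s^2) *\<^sub>R (z - c k)" for k z
  define df where "df = (\<lambda>z. \<Sum>k\<in>I. ((a k - f z) / S z) *\<^sub>R G k z)"
  have qn: "q k z = (norm (z - c k) / s)^2" for k z
    unfolding q_def by (simp add: power_divide power2_norm_eq_inner)
  have qge: "1 \<le> q k z" if "s \<le> norm (z - c k)" for k z
  proof -
    have "1 \<le> norm (z - c k) / s" using that s0 by simp
    hence "1 \<le> (norm (z - c k) / s)^2" by (simp add: one_le_power)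
    thus ?thesis by (simp add: qn)
  qed
  have bnz: "norm (z - c k) < s" if "bk k z \<noteq> 0" for k z
    using that qge psi_zero unfolding bk_def by (meson not_le)
  have Gnz: "norm (z - c k) < s" if "G k z \<noteq> 0" for k z
  proof (rule ccontr)
    assume "\<not> norm (z - c k) < s"
    hence "dpsi (q k z) = 0" using qge dpsi_zero by (simp add: not_less)
    thus False using that unfolding G_def by simp
  qed
  have pk: "p k \<in> K \<and> norm (p k - c k) < s \<and> a k = \<phi> (p k)" if "z \<in> K" "norm (z - c k) < s" for k z
  proof -
    have "ex k" using that unfolding ex_def by blast
    hence "\<exists>p. p \<in> K \<and> norm (p - c k) < s" unfolding ex_def by blast
    from someI_ex[OF this] show ?thesis using \<open>ex k\<close> unfolding p_def a_def by simp
  qed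
  have ak: "\<bar>a k - \<phi> z\<bar> \<le> 2 * s" if z: "z \<in> K" "norm (z - c k) < s" for k z
  proof -
    note P = pk[OF z]
    have "norm (p k - z) \<le> norm (p k - c k) + norm (z - c k)"
      using norm_triangle_ineq4[of "p k - c k" "z - c k"] by simp
    hence n: "norm (p k - z) < 2 * s" using P z by linarith
    hence n': "norm (z - p k) < 2 * s" by (simp add: norm_minus_commute)
    have e1: "norm (p k - z) \<le> \<epsilon>" "norm (z - p k) \<le> \<epsilon>" using n n' s0 s\<epsilon> by linarith+
    have "\<phi> (p k) \<le> \<phi> z + norm (p k - z)" using \<phi>l[OF z(1) _ e1(1)] P by blast
    moreover have "\<phi> z \<le> \<phi> (p k) + norm (z - p k)" using \<phi>l[OF _ z(1) e1(2)] P by blast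
    ultimately show ?thesis using P n n' by auto
  qed
  have R0: "0 \<le> R" using K(2) \<phi>r by fastforce
  have arange: "0 \<le> a k \<and> a k \<le> R" for k
  proof (cases "ex k")
    case True
    hence "\<exists>p. p \<in> K \<and> norm (p - c k) < s" unfolding ex_def by blast
    from someI_ex[OF this] have "p k \<in> K" unfolding p_def by simp
    thus ?thesis using True \<phi>r unfolding a_def by simp
  qed (simp add: a_def R0)
  have bk0: "0 \<le> bk k z" for k z by (simp add: bk_def psi_nonneg)
  have Slow: "9/16 \<le> S z" if z: "z \<in> K" for z
  proof -
    obtain k0 where k0: "k0 \<in> I" "norm (z - lat r k0) \<le> real DIM('a) * r / 2"
      using lat_near[OF r0 _ m, of z] B z unfolding I_def by blast
    have "norm (z - c k0) / s \<le> 1/2" using k0(2) s0 dr unfolding c_def d_def[symmetric]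
      by (simp add: divide_le_eq)
    hence "(norm (z - c k0) / s)^2 \<le> (1/2)^2" using s0 by (intro power_mono) auto
    hence "9/16 \<le> bk k0 z" unfolding bk_def qn by (intro psi_quarter) (simp add: power2_eq_square)
    also have "\<dots> \<le> S z" unfolding S_def using fI k0(1) bk0 by (intro member_le_sum) auto
    finally show ?thesis .
  qed
  have Spos: "S z > 0" if "z \<in> K" for z using Slow[OF that] by linarith
  have fphi: "\<bar>f z - \<phi> z\<bar> \<le> 2 * s" if z: "z \<in> K" for z
  proof -
    have "f z - \<phi> z = (\<Sum>k\<in>I. bk k z * (a k - \<phi> z)) / S z"
      using Spos[OF z] unfolding f_def N_def S_def
      by (simp add: field_simps sum_subtractf sum_distrib_left sum_distrib_right)
    moreover have "\<bar>\<Sum>k\<in>I. bk k z * (a k - \<phi> z)\<bar> \<le> (\<Sum>k\<in>I. bk k z * (2 * s))"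
    proof -
      have "\<bar>\<Sum>k\<in>I. bk k z * (a k - \<phi> z)\<bar> \<le> (\<Sum>k\<in>I. \<bar>bk k z * (a k - \<phi> z)\<bar>)" by (rule sum_abs)
      also have "\<dots> \<le> (\<Sum>k\<in>I. bk k z * (2 * s))"
      proof (rule sum_mono)
        fix k assume "k \<in> I"
        show "\<bar>bk k z * (a k - \<phi> z)\<bar> \<le> bk k z * (2 * s)"
        proof (cases "bk k z = 0")
          case False
          thus ?thesis using ak[OF z bnz[OF False]] bk0[of k z] by (simp add: abs_mult mult_left_mono)
        qed simp
      qed
      finally show ?thesis .
    qed
    moreover have "(\<Sum>k\<in>I. bk k z * (2 * s)) = 2 * s * S z" unfolding S_def by (simp add: sum_distrib_left[symmetric] sum_distrib_right[symmetric] mult.commute)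
    ultimately show ?thesis using Spos[OF z] by (simp add: abs_divide divide_le_eq mult_ac)
  qed
  have frange: "0 \<le> f z \<and> f z \<le> R" if z: "z \<in> K" for z
  proof -
    have "0 \<le> N z" unfolding N_def using arange bk0 by (intro sum_nonneg) simp
    moreover have "N z \<le> R * S z" unfolding N_def S_def sum_distrib_left
      using arange bk0 by (intro sum_mono mult_right_mono) auto
    ultimately show ?thesis using Spos[OF z] unfolding f_def by (simp add: divide_le_eq)
  qed
  have bk_eq: "bk k = (\<lambda>z. psi (inner (z - c k) (z - c k) / s^2))" for k
    by (rule ext) (simp add: bk_def q_def)
  have hb: "(bk k has_derivative (\<lambda>h. inner (G k z) h)) (at z)" for k z
    unfolding bk_eq G_def q_def using bump_deriv[of s "c k" z] s0 by simp
  have hS: "(S has_derivative (\<lambda>h. \<Sum>k\<in>I. inner (G k z) h)) (at z)" for z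
    unfolding S_def by (rule has_derivative_sum) (rule hb)
  have hN: "(N has_derivative (\<lambda>h. \<Sum>k\<in>I. a k * inner (G k z) h)) (at z)" for z
    unfolding N_def by (intro has_derivative_sum has_derivative_mult_right hb)
  have hf: "(f has_derivative (\<lambda>h. inner (df z) h)) (at z)" if z: "z \<in> K" for z
  proof -
    have Sz: "S z \<noteq> 0" using Spos[OF z] by simp
    have "((\<lambda>x. N x / S x) has_derivative (\<lambda>h. - N z * (inverse (S z) * (\<Sum>k\<in>I. inner (G k z) h) * inverse (S z))
        + (\<Sum>k\<in>I. a k * inner (G k z) h) / S z)) (at z)"
      by (rule has_derivative_divide[OF hN hS Sz])
    moreover have "(\<lambda>h. - N z * (inverse (S z) * (\<Sum>k\<in>I. inner (G k z) h) * inverse (S z))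
        + (\<Sum>k\<in>I. a k * inner (G k z) h) / S z) = (\<lambda>h. inner (df z) h)"
    proof (rule ext)
      fix h
      have "inner (df z) h = (\<Sum>k\<in>I. (a k * inner (G k z) h) / S z - (f z / S z) * inner (G k z) h)"
        unfolding df_def inner_sum_left inner_scaleR_left
        by (rule sum.cong) (simp_all add: diff_divide_distrib left_diff_distrib)
      also have "\<dots> = (\<Sum>k\<in>I. a k * inner (G k z) h) / S z - (f z / S z) * (\<Sum>k\<in>I. inner (G k z) h)"
        by (simp add: sum_subtractf sum_divide_distrib sum_distrib_left)
      also have "\<dots> = - N z * (inverse (S z) * (\<Sum>k\<in>I. inner (G k z) h) * inverse (S z))
        + (\<Sum>k\<in>I. a k * inner (G k z) h) / S z"
        unfolding f_def using Sz by (simp add: field_simps)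
      finally show "- N z * (inverse (S z) * (\<Sum>k\<in>I. inner (G k z) h) * inverse (S z))
        + (\<Sum>k\<in>I. a k * inner (G k z) h) / S z = inner (df z) h" by simp
    qed
    ultimately show ?thesis unfolding f_def by simp
  qed
  have cbk: "continuous_on K (bk k)" for k unfolding bk_eq using s0 by (intro continuous_intros) auto
  have cS: "continuous_on K S" unfolding S_def by (intro continuous_on_sum cbk)
  have cN: "continuous_on K N" unfolding N_def by (intro continuous_on_sum continuous_on_mult_left cbk)
  have cf: "continuous_on K f" unfolding f_def using Spos by (intro continuous_on_divide cN cS) force
  have cG: "continuous_on K (G k)" for k unfolding G_def q_def using s0 by (intro continuous_intros) auto
  have cdf: "continuous_on K df" unfolding df_def using Spos
    by (intro continuous_on_sum continuous_on_scaleR continuous_on_divide continuous_on_diff continuous_on_const cf cS cG) force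
  have dfb: "norm (df z) \<le> Acst TYPE('a)" if z: "z \<in> K" for z
  proof -
    define box where "box = lat_box z r (int DIM('a))"
    have tb: "norm (((a k - f z) / S z) *\<^sub>R G k z) \<le> (if k \<in> box then 256/9 else 0)" if kI: "k \<in> I" for k
    proof (cases "G k z = 0")
      case True thus ?thesis by simp
    next
      case False
      have nk: "norm (z - c k) < s" using Gnz[OF False] .
      have kbox: "k \<in> box" unfolding box_def
      proof (rule lat_active[OF r0])
        show "k \<in> Basis \<rightarrow>\<^sub>E UNIV" using kI unfolding I_def by (auto simp: PiE_iff)
        show "norm (z - lat r k) < real_of_int (int DIM('a)) * r" using nk dr unfolding c_def d_def by simp
      qed
      have af: "\<bar>a k - f z\<bar> \<le> 4 * s" using ak[OF z nk] fphi[OF z] by linarith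
      have q0: "0 \<le> q k z" by (simp add: qn)
      have "norm (G k z) = \<bar>dpsi (q k z)\<bar> * 2 / s^2 * norm (z - c k)" unfolding G_def by (simp add: abs_mult)
      also have "\<dots> \<le> 2 * 2 / s^2 * s" using dpsi_bound[OF q0] nk s0
        by (intro mult_mono divide_right_mono) auto
      also have "\<dots> = 4 / s" using s0 by (simp add: power2_eq_square)
      finally have nG: "norm (G k z) \<le> 4 / s" .
      have iS: "1 / S z \<le> 16 / 9" using Slow[OF z] by (simp add: divide_le_eq)
      have "norm (((a k - f z) / S z) *\<^sub>R G k z) = \<bar>a k - f z\<bar> * (1 / S z) * norm (G k z)"
        using Spos[OF z] by (simp add: abs_divide)
      also have "\<dots> \<le> (4 * s) * (16 / 9) * (4 / s)"
        using af iS nG Spos[OF z] by (intro mult_mono) auto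
      also have "\<dots> = 256 / 9" using s0 by simp
      finally show ?thesis using kbox by simp
    qed
    have "norm (df z) \<le> (\<Sum>k\<in>I. norm (((a k - f z) / S z) *\<^sub>R G k z))" unfolding df_def by (rule norm_sum)
    also have "\<dots> \<le> (\<Sum>k\<in>I. (if k \<in> box then 256/9 else 0))" by (intro sum_mono tb)
    also have "\<dots> = (\<Sum>k\<in>I \<inter> box. 256/9)" by (rule sum.inter_restrict[OF fI, symmetric])
    also have "\<dots> = 256/9 * real (card (I \<inter> box))" by simp
    also have "\<dots> \<le> 256/9 * real ((2 * DIM('a) + 1) ^ DIM('a))"
    proof -
      have "card (I \<inter> box) \<le> card box" unfolding box_def by (intro card_mono lat_box_finite) auto
      also have "\<dots> \<le> (2 * nat (int DIM('a)) + 1) ^ DIM('a)" unfolding box_def by (rule lat_box_card) simp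
      finally have "card (I \<inter> box) \<le> (2 * DIM('a) + 1) ^ DIM('a)" by simp
      hence "real (card (I \<inter> box)) \<le> real ((2 * DIM('a) + 1) ^ DIM('a))" by (simp only: of_nat_le_iff)
      thus ?thesis by (rule mult_left_mono) simp
    qed
    also have "\<dots> \<le> Acst TYPE('a)" unfolding Acst_def by simp
    finally show ?thesis .
  qed
  have "is_C1_deriv K f df" unfolding is_C1_deriv_def
    using cdf hf has_derivative_C1limit by blast
  moreover have "\<forall>z\<in>K. \<bar>f z - \<phi> z\<bar> \<le> \<eta>" using fphi s\<eta> by fastforce
  ultimately show ?thesis using frange dfb by blast
qed

lemma C1_norm_le:
  fixes K :: "'a::euclidean_space set"
  assumes K: "compact K" "K \<noteq> {}" and f: "is_C1_deriv K f df"
    and fR: "\<forall>z\<in>K. \<bar>f z\<bar> \<le> R" and dA: "\<forall>z\<in>K. norm (df z) \<le> A"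
  shows "C1_norm K f \<le> R + A"
proof -
  have "sup_norm_on K f \<le> R" unfolding sup_norm_on_def using K(2) fR by (intro cSUP_least) auto
  moreover have "Inf {sup_norm_on K df | df. is_C1_deriv K f df} \<le> sup_norm_on K df"
  proof (rule cInf_lower)
    show "sup_norm_on K df \<in> {sup_norm_on K df | df. is_C1_deriv K f df}" using f by blast
    show "bdd_below {sup_norm_on K df | df. is_C1_deriv K f df}"
    proof (rule bdd_belowI[of _ 0])
      fix t assume "t \<in> {sup_norm_on K df | df. is_C1_deriv K f df}"
      then obtain df' where df': "is_C1_deriv K f df'" "t = sup_norm_on K df'" by blast
      obtain z where z: "z \<in> K" using K(2) by blast
      have "norm (df' z) \<le> sup_norm_on K df'"
        using sup_norm_upper[OF K(1) _ z] df'(1) unfolding is_C1_deriv_def by blast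
      thus "0 \<le> t" using df'(2) by (smt (verit) norm_ge_zero)
    qed
  qed
  moreover have "sup_norm_on K df \<le> A" unfolding sup_norm_on_def using K(2) dA by (intro cSUP_least) auto
  ultimately show ?thesis unfolding C1_norm_def by linarith
qed

lemma close_pairs:
  fixes K :: "'a::euclidean_space set"
  assumes K: "compact K" and C: "C > 0"
    and hyp: "\<forall>f\<in>C1 K. \<forall>x\<in>K. \<forall>y\<in>K. x \<noteq> y \<longrightarrow> \<bar>f y - f x\<bar> / norm (y - x) \<le> C * C1_norm K f"
    and x: "x \<in> K" and y: "y \<in> K" and xy: "norm (y - x) \<le> 1 / (2 * C)"
  shows "rle K x y (C * (2 * Acst TYPE('a) + 1) * norm (y - x))"
proof (cases "x = y")
  case True thus ?thesis using rle_refl[OF x, of 0] by simp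
next
  case False
  define A where "A = Acst TYPE('a)"
  have A0: "0 \<le> A" unfolding A_def Acst_def by simp
  define t where "t = norm (y - x)"
  have t0: "t > 0" using False by (simp add: t_def)
  have Ct: "2 * C * t \<le> 1" using xy C unfolding t_def by (simp add: field_simps)
  define L where "L = C * (2 * A + 1) * t"
  define R where "R = 2 * C * A * t + 1"
  define T where "T = C * (R + A) * t"
  have R1: "1 \<le> R" unfolding R_def using C A0 t0 by simp
  have TR: "T < R"
  proof -
    have "C * R * t \<le> R / 2" using Ct R1 by (simp add: mult_ac)
    moreover have "C * A * t < R / 2" unfolding R_def by simp
    ultimately show ?thesis unfolding T_def by (simp add: distrib_left distrib_right mult_ac)
  qed
  have TL: "T \<le> L"
  proof -
    have "A * (2 * C * t) \<le> A * 1" using Ct A0 by (intro mult_left_mono) auto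
    hence "2 * C * A * t \<le> A" by (simp add: mult_ac)
    hence "R + A \<le> 2 * A + 1" unfolding R_def by simp
    hence "C * (R + A) * t \<le> C * (2 * A + 1) * t" using C t0 by simp
    thus ?thesis unfolding T_def L_def .
  qed
  have K0: "K \<noteq> {}" using x by blast
  show ?thesis unfolding rle_def
  proof (intro allI impI)
    fix \<epsilon> \<eta> :: real assume \<epsilon>: "\<epsilon> > 0" and \<eta>: "\<eta> > 0"
    define X where "X z = insert R {M. chainle K \<epsilon> x z M}" for z
    define \<phi> where "\<phi> z = Inf (X z)" for z
    have Xne: "X z \<noteq> {}" for z unfolding X_def by blast
    have Xge: "0 \<le> u" if "u \<in> X z" for u z
    proof (cases "u = R")
      case False
      hence "chainle K \<epsilon> x z u" using that unfolding X_def by simp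
      thus ?thesis using chain_norm[of K \<epsilon> x z u] norm_ge_zero[of "z - x"] by linarith
    qed (use R1 in simp)
    have Xlow: "bdd_below (X z)" for z using Xge by (intro bdd_belowI[of _ 0]) auto
    have \<phi>r: "0 \<le> \<phi> z \<and> \<phi> z \<le> R" if "z \<in> K" for z
    proof
      show "\<phi> z \<le> R" unfolding \<phi>_def by (rule cInf_lower[OF _ Xlow]) (simp add: X_def)
      show "0 \<le> \<phi> z" unfolding \<phi>_def
      proof (rule cInf_greatest[OF Xne])
        fix u assume "u \<in> X z"
        thus "0 \<le> u" by (rule Xge)
      qed
    qed
    have \<phi>x: "\<phi> x \<le> 0" unfolding \<phi>_def
      by (rule cInf_lower[OF _ Xlow]) (simp add: X_def chain_refl x)
    have \<phi>l: "\<phi> w \<le> \<phi> z + norm (w - z)" if zw: "z \<in> K" "w \<in> K" "norm (w - z) \<le> \<epsilon>" for z w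
    proof -
      have "\<phi> w - norm (w - z) \<le> \<phi> z" unfolding \<phi>_def[of z]
      proof (rule cInf_greatest[OF Xne])
        fix u assume u: "u \<in> X z"
        show "\<phi> w - norm (w - z) \<le> u"
        proof (cases "u = R")
          case True
          have "\<phi> w \<le> R" using \<phi>r[OF zw(2)] by simp
          thus ?thesis using True by (smt (verit) norm_ge_zero)
        next
          case False
          hence "chainle K \<epsilon> x z u" using u unfolding X_def by simp
          hence "chainle K \<epsilon> x w (u + norm (w - z))"
            by (rule chain_trans) (rule chain_step[OF zw(1,2,3) order_refl])
          hence mem: "u + norm (w - z) \<in> X w" unfolding X_def by simp
          have "\<phi> w \<le> u + norm (w - z)" unfolding \<phi>_def by (rule cInf_lower[OF mem Xlow])
          thus ?thesis by simp
        qed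
      qed
      thus ?thesis by simp
    qed
    define \<delta> where "\<delta> = min \<eta> (R - T)"
    have \<delta>: "\<delta> > 0" using \<eta> TR by (simp add: \<delta>_def)
    obtain f df where f: "is_C1_deriv K f df" "\<forall>z\<in>K. 0 \<le> f z \<and> f z \<le> R"
      "\<forall>z\<in>K. norm (df z) \<le> Acst TYPE('a)" "\<forall>z\<in>K. \<bar>f z - \<phi> z\<bar> \<le> \<delta>/3"
      using smooth_approx[OF K K0 \<epsilon>, of "\<delta>/3" \<phi> R] \<delta> \<phi>r \<phi>l by auto
    have fC1: "f \<in> C1 K" using f(1) unfolding C1_def by blast
    have n1: "C1_norm K f \<le> R + A"
      using C1_norm_le[OF K K0 f(1), of R A] f(2,3) unfolding A_def by auto
    have n2: "\<bar>f y - f x\<bar> / t \<le> C * C1_norm K f" using hyp fC1 x y False unfolding t_def by auto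
    have "\<bar>f y - f x\<bar> / t \<le> C * (R + A)" using n2 mult_left_mono[OF n1, of C] C by linarith
    hence "\<bar>f y - f x\<bar> \<le> T" using t0 unfolding T_def by (simp add: divide_le_eq mult_ac)
    moreover have "\<bar>f y - \<phi> y\<bar> \<le> \<delta>/3" "\<bar>f x - \<phi> x\<bar> \<le> \<delta>/3" using f(4) x y by auto
    ultimately have "\<phi> y \<le> T + 2 * (\<delta>/3)" using \<phi>x by linarith
    hence "\<phi> y < T + \<delta>" using \<delta> by simp
    moreover have "\<delta> \<le> \<eta>" "\<delta> \<le> R - T" by (simp_all add: \<delta>_def)
    ultimately have "\<phi> y < R" "\<phi> y < L + \<eta>" using TL by linarith+
    hence "\<phi> y < min R (L + \<eta>)" by simp
    then obtain u where u: "u \<in> X y" "u < min R (L + \<eta>)" using cInf_lessD[OF Xne] unfolding \<phi>_def by blast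
    hence "chainle K \<epsilon> x y u" unfolding X_def by auto
    thus "chainle K \<epsilon> x y (C * (2 * Acst TYPE('a) + 1) * norm (y - x) + \<eta>)"
      by (rule chain_mono) (use u in \<open>auto simp: L_def A_def t_def\<close>)
  qed
qed

lemma global_rle:
  fixes K :: "'a::euclidean_space set"
  assumes K: "compact K" "connected K" and \<delta>: "\<delta> > 0" and L0: "0 \<le> L0"
    and close: "\<And>x y. x \<in> K \<Longrightarrow> y \<in> K \<Longrightarrow> norm (y - x) \<le> \<delta> \<Longrightarrow> rle K x y (L0 * norm (y - x))"
  shows "\<exists>Bd\<ge>0. \<forall>x\<in>K. \<forall>y\<in>K. rle K x y Bd"
proof -
  have fin: "\<exists>M. rle K x y M" if x: "x \<in> K" and y: "y \<in> K" for x y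
  proof -
    define F where "F = {z\<in>K. \<exists>M. rle K x z M}"
    have xF: "x \<in> F" unfolding F_def using x rle_refl[OF x order_refl] by blast
    have o1: "openin (top_of_set K) F"
      unfolding openin_euclidean_subtopology_iff
    proof (intro conjI ballI)
      show "F \<subseteq> K" unfolding F_def by auto
      fix z assume z: "z \<in> F"
      then obtain M where M: "rle K x z M" unfolding F_def by blast
      have "\<forall>w\<in>K. dist w z < \<delta> \<longrightarrow> w \<in> F"
      proof (intro ballI impI)
        fix w assume w: "w \<in> K" "dist w z < \<delta>"
        have "rle K z w (L0 * norm (w - z))" using close[OF _ w(1)] z w(2) unfolding F_def by (auto simp: dist_norm)
        thus "w \<in> F" using rle_trans[OF M] w(1) unfolding F_def by blast
      qed
      thus "\<exists>e>0. \<forall>w\<in>K. dist w z < e \<longrightarrow> w \<in> F" using \<delta> by blast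
    qed
    have o2: "openin (top_of_set K) (K - F)"
      unfolding openin_euclidean_subtopology_iff
    proof (intro conjI ballI)
      show "K - F \<subseteq> K" by auto
      fix z assume z: "z \<in> K - F"
      have "\<forall>w\<in>K. dist w z < \<delta> \<longrightarrow> w \<in> K - F"
      proof (intro ballI impI)
        fix w assume w: "w \<in> K" "dist w z < \<delta>"
        show "w \<in> K - F"
        proof (rule DiffI)
          show "w \<in> K" using w(1) .
          show "w \<notin> F"
          proof
          assume "w \<in> F"
          then obtain M where M: "rle K x w M" unfolding F_def by blast
          have zw: "norm (z - w) \<le> \<delta>" using w(2) by (simp add: dist_norm norm_minus_commute)
          have "rle K w z (L0 * norm (z - w))" using close[OF w(1) _ zw] z by simp
          hence "z \<in> F" using rle_trans[OF M] z unfolding F_def by blast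
          thus False using z by simp
          qed
        qed
      qed
      thus "\<exists>e>0. \<forall>w\<in>K. dist w z < e \<longrightarrow> w \<in> K - F" using \<delta> by blast
    qed
    have "K - F = {}"
    proof (rule ccontr)
      assume ne: "K - F \<noteq> {}"
      have "\<exists>E1 E2. openin (top_of_set K) E1 \<and> openin (top_of_set K) E2 \<and>
               K \<subseteq> E1 \<union> E2 \<and> E1 \<inter> E2 = {} \<and> E1 \<noteq> {} \<and> E2 \<noteq> {}"
        using o1 o2 xF ne by (intro exI[of _ F] exI[of _ "K - F"]) auto
      thus False using K(2) unfolding connected_openin by blast
    qed
    hence "y \<in> F" using y by blast
    thus ?thesis unfolding F_def by blast
  qed
  have cov: "K \<subseteq> (\<Union>z\<in>K. ball z \<delta>)" using \<delta> by auto
  obtain T where T: "T \<subseteq> K" "finite T" "K \<subseteq> (\<Union>z\<in>T. ball z \<delta>)"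
    using compactE_image[OF K(1) _ cov] by blast
  have "\<forall>p. \<exists>M. p \<in> T \<times> T \<longrightarrow> rle K (fst p) (snd p) M" using fin T(1) by auto
  then obtain Mf where Mf: "\<And>p. p \<in> T \<times> T \<Longrightarrow> rle K (fst p) (snd p) (Mf p)" by metis
  have Mf0: "0 \<le> Mf p" if "p \<in> T \<times> T" for p using rle_norm[OF Mf[OF that]] norm_ge_zero order_trans by blast
  define Bd where "Bd = (\<Sum>p\<in>T \<times> T. Mf p) + 2 * (L0 * \<delta>)"
  have Bd0: "0 \<le> Bd" unfolding Bd_def using Mf0 L0 \<delta> by (intro add_nonneg_nonneg sum_nonneg) auto
  have "rle K x y Bd" if x: "x \<in> K" and y: "y \<in> K" for x y
  proof -
    obtain t1 where t1: "t1 \<in> T" "dist t1 x < \<delta>" using T(3) x by auto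
    obtain t2 where t2: "t2 \<in> T" "dist t2 y < \<delta>" using T(3) y by auto
    have t1K: "t1 \<in> K" and t2K: "t2 \<in> K" using t1 t2 T(1) by auto
    have n1: "norm (t1 - x) \<le> \<delta>" using t1(2) by (simp add: dist_norm)
    have n2: "norm (y - t2) \<le> \<delta>" using t2(2) by (simp add: dist_norm norm_minus_commute)
    have r1: "rle K x t1 (L0 * \<delta>)"
      by (rule rle_mono[OF close[OF x t1K n1]]) (rule mult_left_mono[OF n1 L0])
    have r3: "rle K t2 y (L0 * \<delta>)"
      by (rule rle_mono[OF close[OF t2K y n2]]) (rule mult_left_mono[OF n2 L0])
    have p: "(t1, t2) \<in> T \<times> T" using t1 t2 by simp
    have r2: "rle K t1 t2 (Mf (t1, t2))" using Mf[OF p] by simp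
    have rr: "rle K x y (L0 * \<delta> + Mf (t1, t2) + L0 * \<delta>)" using rle_trans[OF rle_trans[OF r1 r2] r3] .
    have "Mf (t1, t2) \<le> (\<Sum>p\<in>T \<times> T. Mf p)"
      using p T(2) Mf0 by (intro member_le_sum) auto
    hence "L0 * \<delta> + Mf (t1, t2) + L0 * \<delta> \<le> Bd" unfolding Bd_def by simp
    thus ?thesis by (rule rle_mono[OF rr])
  qed
  thus ?thesis using Bd0 by blast
qed

lemma dirB:
  fixes K :: "'a::euclidean_space set"
  assumes K: "compact K" "connected K"
    and H: "\<exists>C>0. \<forall>f\<in>C1 K. \<forall>x\<in>K. \<forall>y\<in>K. x \<noteq> y \<longrightarrow>
            \<bar>f y - f x\<bar> / norm (y - x) \<le> C * C1_norm K f"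
  shows "whitney_regular K"
proof -
  obtain C where C: "C > 0" and hyp: "\<forall>f\<in>C1 K. \<forall>x\<in>K. \<forall>y\<in>K. x \<noteq> y \<longrightarrow>
            \<bar>f y - f x\<bar> / norm (y - x) \<le> C * C1_norm K f" using H by blast
  define A where "A = Acst TYPE('a)"
  have A0: "0 \<le> A" unfolding A_def Acst_def by simp
  define \<delta> where "\<delta> = 1 / (2 * C)"
  have \<delta>0: "\<delta> > 0" using C by (simp add: \<delta>_def)
  define L0 where "L0 = C * (2 * A + 1)"
  have L00: "0 \<le> L0" using C A0 by (simp add: L0_def)
  have close: "rle K x y (L0 * norm (y - x))" if "x \<in> K" "y \<in> K" "norm (y - x) \<le> \<delta>" for x y
    using close_pairs[OF K(1) C hyp that(1,2)] that(3) unfolding L0_def A_def \<delta>_def by simp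
  obtain Bd where Bd: "0 \<le> Bd" "\<forall>x\<in>K. \<forall>y\<in>K. rle K x y Bd"
    using global_rle[OF K \<delta>0 L00 close] by blast
  define Cw where "Cw = L0 + 2 * C * Bd + 1"
  have "0 \<le> 2 * C * Bd" using C Bd(1) by simp
  hence Cw: "Cw > 0" unfolding Cw_def using L00 by linarith
  have "rle K x y (Cw * norm (x - y))" if x: "x \<in> K" and y: "y \<in> K" for x y
  proof (cases "norm (y - x) \<le> \<delta>")
    case True
    have "L0 * norm (y - x) \<le> Cw * norm (x - y)" unfolding Cw_def
      using C Bd(1) by (simp add: norm_minus_commute distrib_right)
    thus ?thesis using rle_mono[OF close[OF x y True]] by blast
  next
    case False
    hence "1 < 2 * C * norm (y - x)" using C by (simp add: \<delta>_def field_simps)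
    hence "Bd * 1 \<le> Bd * (2 * C * norm (y - x))" using Bd(1) by (intro mult_left_mono) auto
    also have "\<dots> \<le> Cw * norm (x - y)"
    proof -
      have e: "Cw * norm (x - y) = Bd * (2 * C * norm (y - x)) + (L0 + 1) * norm (y - x)"
        unfolding Cw_def by (simp add: norm_minus_commute algebra_simps)
      have "0 \<le> (L0 + 1) * norm (y - x)" using L00 by simp
      thus ?thesis using e by linarith
    qed
    finally show ?thesis using rle_mono[OF Bd(2)[rule_format, OF x y]] by simp
  qed
  note R = this
  have "\<forall>x\<in>K. \<forall>y\<in>K. \<exists>a b \<gamma>. rectifiable_path_in K a b \<gamma> \<and> \<gamma> a = x \<and> \<gamma> b = y \<and>
      path_length_on a b \<gamma> \<le> Cw * norm (x - y)"
  proof (intro ballI)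
    fix x y assume x: "x \<in> K" and y: "y \<in> K"
    obtain \<gamma> where g: "rectifiable_path_in K 0 1 \<gamma>" "\<gamma> 0 = x" "\<gamma> 1 = y" "path_length_on 0 1 \<gamma> \<le> Cw * norm (x - y)"
      using rle_path[OF K(1) R[OF x y]] by blast
    show "\<exists>a b \<gamma>. rectifiable_path_in K a b \<gamma> \<and> \<gamma> a = x \<and> \<gamma> b = y \<and> path_length_on a b \<gamma> \<le> Cw * norm (x - y)"
      by (rule exI[of _ 0], rule exI[of _ 1], rule exI[of _ \<gamma>]) (use g in simp)
  qed
  thus ?thesis unfolding whitney_regular_def using Cw by blast
qed

theorem mainTheorem9:
  fixes K :: "'a::euclidean_space set"
  assumes "compact K" and "connected K"
  shows "(\<exists>C>0. \<forall>f\<in>C1 K. \<forall>x\<in>K. \<forall>y\<in>K. x \<noteq> y \<longrightarrow>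
            \<bar>f y - f x\<bar> / norm (y - x) \<le> C * C1_norm K f)
         \<longleftrightarrow> whitney_regular K"
proof (rule iffI)
  assume H: "\<exists>C>0. \<forall>f\<in>C1 K. \<forall>x\<in>K. \<forall>y\<in>K. x \<noteq> y \<longrightarrow>
            \<bar>f y - f x\<bar> / norm (y - x) \<le> C * C1_norm K f"
  show "whitney_regular K" by (rule dirB[OF assms H])
next
  assume W: "whitney_regular K"
  show "\<exists>C>0. \<forall>f\<in>C1 K. \<forall>x\<in>K. \<forall>y\<in>K. x \<noteq> y \<longrightarrow>
            \<bar>f y - f x\<bar> / norm (y - x) \<le> C * C1_norm K f" by (rule dirA[OF assms(1) W])
qed

end
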